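(* Suppose $\mathcal E$ and $\mathcal F$ are spatial product systems with normalized units $u$ and $v$ respectively. Then $R^{\mathcal E\otimes\mathcal F}_{u\otimes v}=(R^{\mathcal E}_u\otimes v)\oplus(u\otimes R^{\mathcal F}_v)$; that is, the roots of the unit $u\otimes v=(u_t\otimes v_t)_{t>0}$ of $\mathcal E\otimes\mathcal F$ are exactly the sections $(a_t\otimes v_t+u_t\otimes b_t)_{t>0}$ with $a$ a root of $u$ and $b$ a root of $v$.
   Context: Product systems are measurable families of separable Hilbert spaces $(\mathcal E_t)_{t>0}$ with associative unitaries $W_{s,t}:\mathcal E_{s+t}\to\mathcal E_s\otimes\mathcal E_t$; a unit is a measurable section $(u_t)$ of nonzero vectors with $W_{s,t}u_{s+t}=u_s\otimes u_t$, normalized if $\|u_t\|=1$; spatial means having a unit. $\mathcal E\otimes\mathcal F=(\mathcal E_t\otimes\mathcal F_t)_{t>0}$ is the tensor product product system. An additive unit of a unit $u$ is a measurable section $(a_t)$ with $W_{s,t}a_{s+t}=a_s\otimes u_t+u_s\otimes a_t$ for all $s,t>0$; a root additionally satisfies $\langle a_t,u_t\rangle=0$ for all $t$; $R^{\mathcal E}_u$ is the Hilbert space of roots of $u$ (inner product $\langle a,b\rangle=\langle a_1,b_1\rangle$). *)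

theory Defs
  imports "HOL-Analysis.Analysis"
begin

text \<open>Concrete realisation: every separable Hilbert space is realised as a closed
subspace of the sequence space l2 over a countable index type; tensor products of
l2 spaces are l2 spaces over product index types.\<close>

definition l2 :: "('i \<Rightarrow> complex) set" where
  "l2 = {f. (\<lambda>i. (cmod (f i))^2) summable_on UNIV}"

definition inner_l2 :: "('i \<Rightarrow> complex) \<Rightarrow> ('i \<Rightarrow> complex) \<Rightarrow> complex" where
  "inner_l2 f g = infsum (\<lambda>i. cnj (f i) * g i) UNIV"

definition norm_l2 :: "('i \<Rightarrow> complex) \<Rightarrow> real" where
  "norm_l2 f = sqrt (infsum (\<lambda>i. (cmod (f i))^2) UNIV)"

definition closed_subspace :: "('i \<Rightarrow> complex) set \<Rightarrow> bool" where
  "closed_subspace S \<longleftrightarrow> S \<subseteq> l2 \<and> (\<lambda>_. 0) \<in> S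
     \<and> (\<forall>f\<in>S. \<forall>g\<in>S. (\<lambda>i. f i + g i) \<in> S)
     \<and> (\<forall>c. \<forall>f\<in>S. (\<lambda>i. c * f i) \<in> S)
     \<and> (\<forall>F f. (\<forall>n. F n \<in> S) \<longrightarrow> f \<in> l2 \<longrightarrow>
            (\<lambda>n. norm_l2 (\<lambda>i. F n i - f i)) \<longlonglongrightarrow> 0 \<longrightarrow> f \<in> S)"

definition proj :: "('i \<Rightarrow> complex) set \<Rightarrow> ('i \<Rightarrow> complex) \<Rightarrow> ('i \<Rightarrow> complex)" where
  "proj S y = (THE p. p \<in> S \<and> (\<forall>z\<in>S. inner_l2 z (\<lambda>i. y i - p i) = 0))"

definition tensor_vec :: "('i \<Rightarrow> complex) \<Rightarrow> ('j \<Rightarrow> complex) \<Rightarrow> ('i \<times> 'j \<Rightarrow> complex)" where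
  "tensor_vec a b = (\<lambda>(x, y). a x * b y)"

definition htensor :: "('i \<Rightarrow> complex) set \<Rightarrow> ('j \<Rightarrow> complex) set \<Rightarrow> ('i \<times> 'j \<Rightarrow> complex) set" where
  "htensor E F = \<Inter> {S. closed_subspace S \<and> {tensor_vec a b | a b. a \<in> E \<and> b \<in> F} \<subseteq> S}"

definition unitary_between :: "('i \<Rightarrow> complex) set \<Rightarrow> ('k \<Rightarrow> complex) set
    \<Rightarrow> (('i \<Rightarrow> complex) \<Rightarrow> ('k \<Rightarrow> complex)) \<Rightarrow> bool" where
  "unitary_between E F W \<longleftrightarrow> W ` E = F
     \<and> (\<forall>a\<in>E. \<forall>b\<in>E. W (\<lambda>i. a i + b i) = (\<lambda>k. W a k + W b k))
     \<and> (\<forall>c. \<forall>a\<in>E. W (\<lambda>i. c * a i) = (\<lambda>i. c * W a i))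
     \<and> (\<forall>a\<in>E. \<forall>b\<in>E. inner_l2 (W a) (W b) = inner_l2 a b)"

text \<open>Operators W \<otimes> id and id \<otimes> W acting on vectors of l2 over product index types.\<close>
definition left_tensor :: "(('i \<Rightarrow> complex) \<Rightarrow> ('k \<Rightarrow> complex)) \<Rightarrow> ('i \<times> 'j \<Rightarrow> complex) \<Rightarrow> ('k \<times> 'j \<Rightarrow> complex)" where
  "left_tensor W f = (\<lambda>(z, y). W (\<lambda>x. f (x, y)) z)"

definition right_tensor :: "(('j \<Rightarrow> complex) \<Rightarrow> ('k \<Rightarrow> complex)) \<Rightarrow> ('i \<times> 'j \<Rightarrow> complex) \<Rightarrow> ('i \<times> 'k \<Rightarrow> complex)" where
  "right_tensor W f = (\<lambda>(y, z). W (\<lambda>x. f (y, x)) z)"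

definition reassoc :: "('a \<times> ('b \<times> 'c) \<Rightarrow> complex) \<Rightarrow> (('a \<times> 'b) \<times> 'c \<Rightarrow> complex)" where
  "reassoc g = (\<lambda>((a, b), c). g (a, (b, c)))"

definition meas_section :: "(real \<Rightarrow> ('i \<Rightarrow> complex)) \<Rightarrow> bool" where
  "meas_section a \<longleftrightarrow> (\<forall>x\<in>l2. (\<lambda>t. inner_l2 x (a t)) \<in> borel_measurable (restrict_space borel {0<..}))"

definition meas_family :: "(real \<Rightarrow> ('i \<Rightarrow> complex) set) \<Rightarrow> bool" where
  "meas_family E \<longleftrightarrow> (\<forall>x\<in>l2. \<forall>y\<in>l2.
      (\<lambda>t. inner_l2 x (proj (E t) y)) \<in> borel_measurable (restrict_space borel {0<..}))"

definition meas_W :: "(real \<Rightarrow> ('i \<Rightarrow> complex) set)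
    \<Rightarrow> (real \<Rightarrow> real \<Rightarrow> ('i \<Rightarrow> complex) \<Rightarrow> ('i \<times> 'i \<Rightarrow> complex)) \<Rightarrow> bool" where
  "meas_W E W \<longleftrightarrow> (\<forall>x\<in>l2. \<forall>z\<in>l2.
      (\<lambda>(s, t). inner_l2 z (W s t (proj (E (s + t)) x)))
        \<in> borel_measurable (restrict_space borel {p :: real \<times> real. 0 < fst p \<and> 0 < snd p}))"

definition product_system :: "(real \<Rightarrow> ('i::countable \<Rightarrow> complex) set)
    \<Rightarrow> (real \<Rightarrow> real \<Rightarrow> ('i \<Rightarrow> complex) \<Rightarrow> ('i \<times> 'i \<Rightarrow> complex)) \<Rightarrow> bool" where
  "product_system E W \<longleftrightarrow>
     (\<forall>t>0. closed_subspace (E t)) \<and> meas_family E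
     \<and> (\<forall>s>0. \<forall>t>0. unitary_between (E (s + t)) (htensor (E s) (E t)) (W s t))
     \<and> meas_W E W
     \<and> (\<forall>r>0. \<forall>s>0. \<forall>t>0. \<forall>x\<in>E (r + s + t).
          left_tensor (W r s) (W (r + s) t x) = reassoc (right_tensor (W s t) (W r (s + t) x)))"

definition is_unit :: "(real \<Rightarrow> ('i \<Rightarrow> complex) set)
    \<Rightarrow> (real \<Rightarrow> real \<Rightarrow> ('i \<Rightarrow> complex) \<Rightarrow> ('i \<times> 'i \<Rightarrow> complex)) \<Rightarrow> (real \<Rightarrow> ('i \<Rightarrow> complex)) \<Rightarrow> bool" where
  "is_unit E W u \<longleftrightarrow> meas_section u \<and> (\<forall>t>0. u t \<in> E t \<and> u t \<noteq> (\<lambda>_. 0))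
     \<and> (\<forall>s>0. \<forall>t>0. W s t (u (s + t)) = tensor_vec (u s) (u t))"

definition normalized_unit :: "(real \<Rightarrow> ('i \<Rightarrow> complex) set)
    \<Rightarrow> (real \<Rightarrow> real \<Rightarrow> ('i \<Rightarrow> complex) \<Rightarrow> ('i \<times> 'i \<Rightarrow> complex)) \<Rightarrow> (real \<Rightarrow> ('i \<Rightarrow> complex)) \<Rightarrow> bool" where
  "normalized_unit E W u \<longleftrightarrow> is_unit E W u \<and> (\<forall>t>0. norm_l2 (u t) = 1)"

definition additive_unit :: "(real \<Rightarrow> ('i \<Rightarrow> complex) set)
    \<Rightarrow> (real \<Rightarrow> real \<Rightarrow> ('i \<Rightarrow> complex) \<Rightarrow> ('i \<times> 'i \<Rightarrow> complex)) \<Rightarrow> (real \<Rightarrow> ('i \<Rightarrow> complex))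
    \<Rightarrow> (real \<Rightarrow> ('i \<Rightarrow> complex)) \<Rightarrow> bool" where
  "additive_unit E W u a \<longleftrightarrow> meas_section a \<and> (\<forall>t>0. a t \<in> E t)
     \<and> (\<forall>s>0. \<forall>t>0. W s t (a (s + t)) = (\<lambda>p. tensor_vec (a s) (u t) p + tensor_vec (u s) (a t) p))"

definition roots :: "(real \<Rightarrow> ('i \<Rightarrow> complex) set)
    \<Rightarrow> (real \<Rightarrow> real \<Rightarrow> ('i \<Rightarrow> complex) \<Rightarrow> ('i \<times> 'i \<Rightarrow> complex)) \<Rightarrow> (real \<Rightarrow> ('i \<Rightarrow> complex))
    \<Rightarrow> (real \<Rightarrow> ('i \<Rightarrow> complex)) set" where
  "roots E W u = {a. additive_unit E W u a \<and> (\<forall>t>0. inner_l2 (a t) (u t) = 0)}"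

definition tensor_spaces :: "(real \<Rightarrow> ('i \<Rightarrow> complex) set) \<Rightarrow> (real \<Rightarrow> ('j \<Rightarrow> complex) set)
    \<Rightarrow> real \<Rightarrow> ('i \<times> 'j \<Rightarrow> complex) set" where
  "tensor_spaces E F t = htensor (E t) (F t)"

definition shuffle :: "(('a \<times> 'c) \<times> ('b \<times> 'd) \<Rightarrow> complex) \<Rightarrow> (('a \<times> 'b) \<times> ('c \<times> 'd) \<Rightarrow> complex)" where
  "shuffle g = (\<lambda>((a, b), (c, d)). g ((a, c), (b, d)))"

definition tensor_W :: "(real \<Rightarrow> real \<Rightarrow> ('i \<Rightarrow> complex) \<Rightarrow> ('i \<times> 'i \<Rightarrow> complex))
    \<Rightarrow> (real \<Rightarrow> real \<Rightarrow> ('j \<Rightarrow> complex) \<Rightarrow> ('j \<times> 'j \<Rightarrow> complex))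
    \<Rightarrow> real \<Rightarrow> real \<Rightarrow> ('i \<times> 'j \<Rightarrow> complex) \<Rightarrow> (('i \<times> 'j) \<times> ('i \<times> 'j) \<Rightarrow> complex)" where
  "tensor_W WE WF s t f = shuffle (left_tensor (WE s t) (right_tensor (WF s t) f))"

definition tensor_section :: "(real \<Rightarrow> ('i \<Rightarrow> complex)) \<Rightarrow> (real \<Rightarrow> ('j \<Rightarrow> complex))
    \<Rightarrow> real \<Rightarrow> ('i \<times> 'j \<Rightarrow> complex)" where
  "tensor_section u v t = tensor_vec (u t) (v t)"

end

theory Submission
  imports Defs
begin

abbreviation abss :: "('a \<Rightarrow> 'b::real_normed_vector) \<Rightarrow> bool" where
  "abss f \<equiv> (\<lambda>x. norm (f x)) summable_on UNIV"

definition nrm2 :: "('a \<Rightarrow> complex) \<Rightarrow> real" where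
  "nrm2 f = infsum (\<lambda>i. (cmod (f i))^2) UNIV"

lemma prod_abs_summable:
  fixes f :: "'a \<Rightarrow> 'c::{real_normed_field,banach}" and g :: "'b \<Rightarrow> 'c"
  assumes f: "abss f" and g: "abss g"
  shows "abss (\<lambda>(x,y). f x * g y)"
proof -
  have "(\<lambda>p. norm ((\<lambda>(x,y). f x * g y) p)) summable_on Sigma UNIV (\<lambda>_. UNIV)"
  proof (rule summable_on_SigmaI[where g="\<lambda>x. norm (f x) * infsum (\<lambda>y. norm (g y)) UNIV"])
    fix x :: 'a
    have "((\<lambda>y. norm (g y)) has_sum infsum (\<lambda>y. norm (g y)) UNIV) UNIV"
      using g by (simp add: has_sum_infsum)
    then show "((\<lambda>y. norm ((\<lambda>(x, y). f x * g y) (x, y))) has_sum norm (f x) * infsum (\<lambda>y. norm (g y)) UNIV) UNIV"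
      by (simp add: norm_mult has_sum_cmult_right)
  next
    show "(\<lambda>x. norm (f x) * infsum (\<lambda>y. norm (g y)) UNIV) summable_on UNIV"
      using f by (rule summable_on_cmult_left)
  qed auto
  then show ?thesis by simp
qed

lemma prod_infsum:
  fixes f :: "'a \<Rightarrow> 'c::{real_normed_field,banach}" and g :: "'b \<Rightarrow> 'c"
  assumes f: "abss f" and g: "abss g"
  shows "infsum (\<lambda>(x,y). f x * g y) UNIV = infsum f UNIV * infsum g UNIV"
proof -
  have s: "(\<lambda>(x,y). f x * g y) summable_on Sigma UNIV (\<lambda>_. UNIV)"
    using abs_summable_summable[OF prod_abs_summable[OF f g]] by simp
  have "infsum (\<lambda>(x,y). f x * g y) UNIV = infsum (\<lambda>x. infsum (\<lambda>y. f x * g y) UNIV) UNIV"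
    using infsum_Sigma'_banach[OF s] by simp
  also have "\<dots> = infsum (\<lambda>x. f x * infsum g UNIV) UNIV"
    by (simp add: infsum_cmult_right')
  also have "\<dots> = infsum f UNIV * infsum g UNIV"
    by (simp add: infsum_cmult_left')
  finally show ?thesis .
qed

lemma l2_iff: "f \<in> l2 \<longleftrightarrow> (\<lambda>i. (cmod (f i))^2) summable_on UNIV"
  by (simp add: l2_def)

lemma l2_abs: "f \<in> l2 \<Longrightarrow> abss (\<lambda>i. (cmod (f i))^2)"
  by (simp add: l2_def)

lemma summable_inner_abs:
  assumes "f \<in> l2" "g \<in> l2"
  shows "abss (\<lambda>i. cnj (f i) * g i)"
proof (rule summable_on_comparison_test[where f="\<lambda>i. (cmod (f i))^2 + (cmod (g i))^2"])
  show "(\<lambda>i. (cmod (f i))^2 + (cmod (g i))^2) summable_on UNIV"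
    using assms by (intro summable_on_add) (auto simp: l2_def)
  fix i
  have "2 * (cmod (f i) * cmod (g i)) \<le> (cmod (f i))^2 + (cmod (g i))^2"
    using sum_squares_bound[of "cmod (f i)" "cmod (g i)"] by simp
  moreover have "0 \<le> cmod (f i) * cmod (g i)" by simp
  moreover have "norm (cnj (f i) * g i) = cmod (f i) * cmod (g i)" by (simp add: norm_mult)
  ultimately show "norm (cnj (f i) * g i) \<le> (cmod (f i))^2 + (cmod (g i))^2"
    by linarith
qed auto

lemma summable_inner: "f \<in> l2 \<Longrightarrow> g \<in> l2 \<Longrightarrow> (\<lambda>i. cnj (f i) * g i) summable_on UNIV"
  by (rule abs_summable_summable[OF summable_inner_abs])

lemma l2_add: assumes "f \<in> l2" "g \<in> l2" shows "(\<lambda>i. f i + g i) \<in> l2"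
proof -
  have "(\<lambda>i. 2 * (cmod (f i))^2 + 2 * (cmod (g i))^2) summable_on UNIV"
    using assms by (intro summable_on_add summable_on_cmult_right) (auto simp: l2_def)
  then show ?thesis unfolding l2_def mem_Collect_eq
  proof (rule summable_on_comparison_test, simp_all)
    fix i
    have "cmod (f i + g i) \<le> cmod (f i) + cmod (g i)" by (rule norm_triangle_ineq)
    then have "(cmod (f i + g i))^2 \<le> (cmod (f i) + cmod (g i))^2"
      by (simp add: power_mono)
    also have "\<dots> \<le> 2 * (cmod (f i))^2 + 2 * (cmod (g i))^2"
      using sum_squares_bound[of "cmod (f i)" "cmod (g i)"] by (simp add: power2_sum)
    finally show "(cmod (f i + g i))^2 \<le> 2 * (cmod (f i))^2 + 2 * (cmod (g i))^2" .
  qed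
qed

lemma l2_scale: assumes "f \<in> l2" shows "(\<lambda>i. c * f i) \<in> l2"
  using summable_on_cmult_right[of "\<lambda>i. (cmod (f i))^2" UNIV "(cmod c)^2"] assms
  by (simp add: l2_def norm_mult power_mult_distrib)

lemma l2_zero[simp]: "(\<lambda>_. 0) \<in> l2"
  by (simp add: l2_def)

lemma l2_minus: "f \<in> l2 \<Longrightarrow> (\<lambda>i. - f i) \<in> l2"
  using l2_scale[of f "-1"] by simp

lemma l2_diff: "f \<in> l2 \<Longrightarrow> g \<in> l2 \<Longrightarrow> (\<lambda>i. f i - g i) \<in> l2"
  using l2_add[of f "\<lambda>i. - g i"] l2_minus[of g] by simp

lemma l2_tensor: assumes "a \<in> l2" "b \<in> l2" shows "tensor_vec a b \<in> l2"
proof -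
  have "abss (\<lambda>(x,y). (cmod (a x))^2 * (cmod (b y))^2)"
    using prod_abs_summable[OF l2_abs l2_abs, OF assms] by simp
  then show ?thesis
    by (simp add: l2_def tensor_vec_def case_prod_beta norm_mult power_mult_distrib)
qed

lemma infsum_of_real_sum:
  assumes "f summable_on A"
  shows "infsum (\<lambda>x. complex_of_real (f x)) A = complex_of_real (infsum f A)"
  using has_sum_of_real[OF has_sum_infsum[OF assms], where 'a=complex] infsumI by blast

lemma inner_add_right:
  assumes "f \<in> l2" "g \<in> l2" "h \<in> l2"
  shows "inner_l2 f (\<lambda>i. g i + h i) = inner_l2 f g + inner_l2 f h"
  unfolding inner_l2_def
  using infsum_add[OF summable_inner[OF assms(1,2)] summable_inner[OF assms(1,3)]]
  by (simp add: distrib_left)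

lemma inner_add_left:
  assumes "f \<in> l2" "g \<in> l2" "h \<in> l2"
  shows "inner_l2 (\<lambda>i. f i + g i) h = inner_l2 f h + inner_l2 g h"
  unfolding inner_l2_def
  using infsum_add[OF summable_inner[OF assms(1,3)] summable_inner[OF assms(2,3)]]
  by (simp add: distrib_right)

lemma inner_scale_right: "inner_l2 f (\<lambda>i. c * g i) = c * inner_l2 f g"
  unfolding inner_l2_def
  by (subst infsum_cmult_right'[symmetric]) (simp add: algebra_simps)

lemma inner_scale_left: "inner_l2 (\<lambda>i. c * f i) g = cnj c * inner_l2 f g"
  unfolding inner_l2_def
  by (subst infsum_cmult_right'[symmetric]) (simp add: algebra_simps)

lemma inner_conj: "inner_l2 g f = cnj (inner_l2 f g)"
  unfolding inner_l2_def
  by (subst infsum_cnj[symmetric]) (simp add: mult.commute)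

lemma inner_zero_left[simp]: "inner_l2 (\<lambda>_. 0) g = 0"
  by (simp add: inner_l2_def)

lemma inner_zero_right[simp]: "inner_l2 f (\<lambda>_. 0) = 0"
  by (simp add: inner_l2_def)

lemma inner_minus_right: "inner_l2 f (\<lambda>i. - g i) = - inner_l2 f g"
  using inner_scale_right[of f "-1" g] by simp

lemma inner_minus_left: "inner_l2 (\<lambda>i. - f i) g = - inner_l2 f g"
  using inner_scale_left[of "-1" f g] by simp

lemma inner_diff_right:
  assumes "f \<in> l2" "g \<in> l2" "h \<in> l2"
  shows "inner_l2 f (\<lambda>i. g i - h i) = inner_l2 f g - inner_l2 f h"
  using inner_add_right[OF assms(1,2) l2_minus[OF assms(3)]] inner_minus_right[of f h] by simp

lemma inner_diff_left:
  assumes "f \<in> l2" "g \<in> l2" "h \<in> l2"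
  shows "inner_l2 (\<lambda>i. f i - g i) h = inner_l2 f h - inner_l2 g h"
  using inner_add_left[OF assms(1) l2_minus[OF assms(2)] assms(3)] inner_minus_left[of g h] by simp

lemma inner_self: "f \<in> l2 \<Longrightarrow> inner_l2 f f = complex_of_real (nrm2 f)"
  unfolding inner_l2_def nrm2_def
  apply (subst infsum_of_real_sum[symmetric])
   apply (simp add: l2_def)
  apply (rule infsum_cong)
  apply (metis complex_norm_square mult.commute)
  done

lemma nrm2_nonneg: "nrm2 f \<ge> 0"
  unfolding nrm2_def by (rule infsum_nonneg) simp

lemma coord_le: assumes "f \<in> l2" shows "(cmod (f i))^2 \<le> nrm2 f"
proof -
  have "infsum (\<lambda>i. (cmod (f i))^2) {i} \<le> infsum (\<lambda>i. (cmod (f i))^2) UNIV"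
    using assms by (intro infsum_mono_neutral) (auto simp: l2_def)
  then show ?thesis by (simp add: nrm2_def)
qed

lemma nrm2_zero: assumes "f \<in> l2" "nrm2 f = 0" shows "f = (\<lambda>_. 0)"
proof
  fix i show "f i = 0" using coord_le[OF assms(1), of i] assms(2) by simp
qed

lemma nrm2_zero_fun[simp]: "nrm2 (\<lambda>_. 0) = 0"
  by (simp add: nrm2_def)

lemma norm_l2_nrm2: "norm_l2 f = sqrt (nrm2 f)"
  by (simp add: norm_l2_def nrm2_def)

lemma nrm2_eq_inner: "f \<in> l2 \<Longrightarrow> nrm2 f = Re (inner_l2 f f)"
  by (simp add: inner_self)

lemma inner_expand:
  assumes "f \<in> l2" "g \<in> l2"
  shows "inner_l2 (\<lambda>i. f i + c * g i) (\<lambda>i. f i + c * g i)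
       = inner_l2 f f + c * inner_l2 f g + cnj c * inner_l2 g f + cnj c * c * inner_l2 g g"
proof -
  have l: "(\<lambda>i. c * g i) \<in> l2" using assms l2_scale by blast
  have ll: "(\<lambda>i. f i + c * g i) \<in> l2" using assms l l2_add by blast
  have "inner_l2 (\<lambda>i. f i + c * g i) (\<lambda>i. f i + c * g i)
      = inner_l2 f (\<lambda>i. f i + c * g i) + inner_l2 (\<lambda>i. c * g i) (\<lambda>i. f i + c * g i)"
    by (rule inner_add_left[OF assms(1) l ll])
  also have "inner_l2 f (\<lambda>i. f i + c * g i) = inner_l2 f f + inner_l2 f (\<lambda>i. c * g i)"
    by (rule inner_add_right[OF assms(1) assms(1) l])
  also have "inner_l2 (\<lambda>i. c * g i) (\<lambda>i. f i + c * g i) = inner_l2 (\<lambda>i. c * g i) f + inner_l2 (\<lambda>i. c * g i) (\<lambda>i. c * g i)"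
    by (rule inner_add_right[OF l assms(1) l])
  finally show ?thesis
    unfolding inner_scale_left inner_scale_right by simp
qed

lemma cauchy_schwarz:
  assumes "f \<in> l2" "g \<in> l2"
  shows "(cmod (inner_l2 f g))^2 \<le> nrm2 f * nrm2 g"
proof (cases "nrm2 f = 0")
  case True
  then have "f = (\<lambda>_. 0)" using nrm2_zero assms by blast
  then show ?thesis by (simp add: nrm2_nonneg)
next
  case False
  then have N: "nrm2 f > 0" using nrm2_nonneg[of f] by linarith
  define p where "p = inner_l2 f g"
  define c where "c = - p / complex_of_real (nrm2 f)"
  have h: "(\<lambda>i. g i + c * f i) \<in> l2" using assms l2_add l2_scale by blast
  have "complex_of_real (nrm2 (\<lambda>i. g i + c * f i)) = inner_l2 g g + c * inner_l2 g f + cnj c * inner_l2 f g + cnj c * c * inner_l2 f f"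
    using inner_self[OF h] inner_expand[OF assms(2,1), of c] by simp
  also have "\<dots> = complex_of_real (nrm2 g) - p * cnj p / complex_of_real (nrm2 f)"
  proof -
    have e1: "inner_l2 g f = cnj p" by (simp add: p_def inner_conj[of g f])
    have e2: "inner_l2 f f = complex_of_real (nrm2 f)" "inner_l2 g g = complex_of_real (nrm2 g)"
      using inner_self assms by auto
    have cc: "cnj c = - cnj p / complex_of_real (nrm2 f)" by (simp add: c_def)
    have Nz: "complex_of_real (nrm2 f) \<noteq> 0" using N by simp
    show ?thesis
      unfolding e1 e2 cc p_def[symmetric] unfolding c_def
      using Nz by (simp add: field_simps power2_eq_square)
  qed
  also have "\<dots> = complex_of_real (nrm2 g - (cmod p)^2 / nrm2 f)"
  proof -
    have "p * cnj p = complex_of_real ((cmod p)^2)" by (rule complex_norm_square[symmetric])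
    then show ?thesis by simp
  qed
  finally have "nrm2 (\<lambda>i. g i + c * f i) = nrm2 g - (cmod p)^2 / nrm2 f"
    using of_real_eq_iff by blast
  then have "0 \<le> nrm2 g - (cmod p)^2 / nrm2 f" using nrm2_nonneg by metis
  then show ?thesis using N by (simp add: p_def field_simps)
qed

lemma nrm2_add:
  assumes "f \<in> l2" "g \<in> l2"
  shows "nrm2 (\<lambda>i. f i + g i) = nrm2 f + nrm2 g + 2 * Re (inner_l2 f g)"
proof -
  have "complex_of_real (nrm2 (\<lambda>i. f i + g i)) = inner_l2 f f + inner_l2 f g + inner_l2 g f + inner_l2 g g"
    using inner_self[OF l2_add[OF assms]] inner_expand[OF assms, of 1] by simp
  then have "nrm2 (\<lambda>i. f i + g i) = Re (inner_l2 f f + inner_l2 f g + inner_l2 g f + inner_l2 g g)"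
    by (metis Re_complex_of_real)
  then show ?thesis using inner_self[OF assms(1)] inner_self[OF assms(2)] by (simp add: inner_conj[of g f])
qed

lemma nrm2_diff_le:
  assumes "f \<in> l2" "g \<in> l2"
  shows "nrm2 (\<lambda>i. f i - g i) \<le> 2 * nrm2 f + 2 * nrm2 g"
proof -
  have a: "nrm2 (\<lambda>i. f i + g i) = nrm2 f + nrm2 g + 2 * Re (inner_l2 f g)"
    by (rule nrm2_add[OF assms])
  have b: "nrm2 (\<lambda>i. f i + - g i) = nrm2 f + nrm2 (\<lambda>i. - g i) + 2 * Re (inner_l2 f (\<lambda>i. - g i))"
    by (rule nrm2_add[OF assms(1) l2_minus[OF assms(2)]])
  have c: "nrm2 (\<lambda>i. - g i) = nrm2 g" by (simp add: nrm2_def)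
  show ?thesis using a b c nrm2_nonneg[of "\<lambda>i. f i + g i"] by (simp add: inner_minus_right)
qed

lemma nrm2_scale: "nrm2 (\<lambda>i. c * f i) = (cmod c)^2 * nrm2 f"
  unfolding nrm2_def by (simp add: norm_mult power_mult_distrib infsum_cmult_right')

lemma inner_tensor:
  assumes "a \<in> l2" "b \<in> l2" "c \<in> l2" "d \<in> l2"
  shows "inner_l2 (tensor_vec a b) (tensor_vec c d) = inner_l2 a c * inner_l2 b d"
proof -
  have "inner_l2 (tensor_vec a b) (tensor_vec c d) = infsum (\<lambda>(x,y). (cnj (a x) * c x) * (cnj (b y) * d y)) UNIV"
    unfolding inner_l2_def tensor_vec_def by (intro infsum_cong) (auto simp: algebra_simps)
  also have "\<dots> = inner_l2 a c * inner_l2 b d"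
    unfolding inner_l2_def
    by (rule prod_infsum[OF summable_inner_abs summable_inner_abs]) (use assms in auto)
  finally show ?thesis .
qed

lemma nrm2_tensor:
  assumes "a \<in> l2" "b \<in> l2"
  shows "nrm2 (tensor_vec a b) = nrm2 a * nrm2 b"
  using inner_tensor[OF assms assms] inner_self[OF l2_tensor[OF assms]] inner_self assms
  by (metis of_real_eq_iff of_real_mult)

definition delta :: "'a \<Rightarrow> 'a \<Rightarrow> complex" where
  "delta i = (\<lambda>j. if j = i then 1 else 0)"

lemma delta_l2[simp]: "delta i \<in> l2"
proof -
  have "(\<lambda>j. (cmod (delta i j))^2) summable_on UNIV \<longleftrightarrow> (\<lambda>j. (cmod (delta i j))^2) summable_on {i}"
    by (rule summable_on_cong_neutral) (auto simp: delta_def)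
  then show ?thesis unfolding l2_def by simp
qed

lemma inner_delta: "inner_l2 (delta i) f = f i"
  unfolding inner_l2_def delta_def
  by (subst infsum_cong_neutral[where T="{i}"]) auto

section \<open>Closed subspaces\<close>

lemma cs_l2: "closed_subspace S \<Longrightarrow> f \<in> S \<Longrightarrow> f \<in> l2"
  unfolding closed_subspace_def by blast

lemma cs_zero: "closed_subspace S \<Longrightarrow> (\<lambda>_. 0) \<in> S"
  unfolding closed_subspace_def by blast

lemma cs_add: "closed_subspace S \<Longrightarrow> f \<in> S \<Longrightarrow> g \<in> S \<Longrightarrow> (\<lambda>i. f i + g i) \<in> S"
  unfolding closed_subspace_def by blast

lemma cs_scale: "closed_subspace S \<Longrightarrow> f \<in> S \<Longrightarrow> (\<lambda>i. c * f i) \<in> S"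
  unfolding closed_subspace_def by blast

lemma cs_minus: "closed_subspace S \<Longrightarrow> f \<in> S \<Longrightarrow> (\<lambda>i. - f i) \<in> S"
  using cs_scale[of S f "-1"] by simp

lemma cs_diff: "closed_subspace S \<Longrightarrow> f \<in> S \<Longrightarrow> g \<in> S \<Longrightarrow> (\<lambda>i. f i - g i) \<in> S"
  using cs_add[of S f "\<lambda>i. - g i"] cs_minus[of S g] by simp

lemma conv_iff:
  "(\<lambda>n. norm_l2 (D n)) \<longlonglongrightarrow> 0 \<longleftrightarrow> (\<lambda>n. nrm2 (D n)) \<longlonglongrightarrow> 0"
proof
  assume "(\<lambda>n. norm_l2 (D n)) \<longlonglongrightarrow> 0"
  then have "(\<lambda>n. (norm_l2 (D n))^2) \<longlonglongrightarrow> 0^2" by (intro tendsto_power)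
  then show "(\<lambda>n. nrm2 (D n)) \<longlonglongrightarrow> 0" by (simp add: norm_l2_nrm2 nrm2_nonneg)
next
  assume "(\<lambda>n. nrm2 (D n)) \<longlonglongrightarrow> 0"
  then have "(\<lambda>n. sqrt (nrm2 (D n))) \<longlonglongrightarrow> sqrt 0" by (intro tendsto_real_sqrt)
  then show "(\<lambda>n. norm_l2 (D n)) \<longlonglongrightarrow> 0" by (simp add: norm_l2_nrm2)
qed

lemma cs_lim:
  assumes "closed_subspace S" "\<And>n. F n \<in> S" "f \<in> l2"
    "(\<lambda>n. nrm2 (\<lambda>i. F n i - f i)) \<longlonglongrightarrow> 0"
  shows "f \<in> S"
  using assms conv_iff[of "\<lambda>n i. F n i - f i"] unfolding closed_subspace_def by blast

lemma cs_l2_whole: "closed_subspace l2"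
  unfolding closed_subspace_def using l2_add l2_scale by auto

lemma cs_zero_space: "closed_subspace {(\<lambda>_. 0)}"
  unfolding closed_subspace_def
proof (intro conjI allI impI ballI; (simp)?)
  fix f :: "'a \<Rightarrow> complex"
  assume "(\<lambda>n. norm_l2 (\<lambda>i. - f i)) \<longlonglongrightarrow> 0"
  then have "norm_l2 (\<lambda>i. - f i) = 0" by (simp add: LIMSEQ_const_iff)
  then have "nrm2 f = 0" by (simp add: norm_l2_nrm2 nrm2_def)
  moreover assume "f \<in> l2"
  ultimately show "f = (\<lambda>_. 0)" using nrm2_zero by blast
qed

lemma cs_Inter:
  assumes "\<And>S. S \<in> \<S> \<Longrightarrow> closed_subspace S" "\<S> \<noteq> {}"
  shows "closed_subspace (\<Inter> \<S>)"
proof -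
  have "\<Inter> \<S> \<subseteq> l2" using assms cs_l2 by blast
  moreover have "(\<lambda>_. 0) \<in> \<Inter> \<S>" using assms cs_zero by blast
  moreover have "(\<lambda>i. f i + g i) \<in> \<Inter> \<S>" if "f \<in> \<Inter> \<S>" "g \<in> \<Inter> \<S>" for f g
    using that assms cs_add by blast
  moreover have "(\<lambda>i. c * f i) \<in> \<Inter> \<S>" if "f \<in> \<Inter> \<S>" for c f
    using that assms cs_scale by blast
  moreover have "f \<in> \<Inter> \<S>" if "\<forall>n. F n \<in> \<Inter> \<S>" "f \<in> l2"
     "(\<lambda>n. norm_l2 (\<lambda>i. F n i - f i)) \<longlonglongrightarrow> 0" for F f
  proof
    fix S assume S: "S \<in> \<S>"
    then have "closed_subspace S" using assms by blast
    then show "f \<in> S" using that S unfolding closed_subspace_def by blast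
  qed
  ultimately show ?thesis unfolding closed_subspace_def by blast
qed

lemma tensor_in_htensor: "a \<in> E \<Longrightarrow> b \<in> F \<Longrightarrow> tensor_vec a b \<in> htensor E F"
  unfolding htensor_def by blast

lemma htensor_cs:
  assumes "E \<subseteq> l2" "F \<subseteq> l2"
  shows "closed_subspace (htensor E F)"
  unfolding htensor_def
proof (rule cs_Inter)
  show "{S. closed_subspace S \<and> {tensor_vec a b |a b. a \<in> E \<and> b \<in> F} \<subseteq> S} \<noteq> {}"
    using cs_l2_whole l2_tensor assms by blast
qed auto

lemma htensor_sub:
  assumes "closed_subspace S" "\<And>a b. a \<in> E \<Longrightarrow> b \<in> F \<Longrightarrow> tensor_vec a b \<in> S"
  shows "htensor E F \<subseteq> S"
  unfolding htensor_def using assms by blast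

lemma cs_preimage:
  assumes D: "closed_subspace D" and Z: "closed_subspace Z"
    and maps: "\<And>f. f \<in> D \<Longrightarrow> \<Phi> f \<in> l2"
    and add: "\<And>f g. f \<in> D \<Longrightarrow> g \<in> D \<Longrightarrow> \<Phi> (\<lambda>i. f i + g i) = (\<lambda>k. \<Phi> f k + \<Phi> g k)"
    and scale: "\<And>c f. f \<in> D \<Longrightarrow> \<Phi> (\<lambda>i. c * f i) = (\<lambda>k. c * \<Phi> f k)"
    and bound: "\<And>f. f \<in> D \<Longrightarrow> nrm2 (\<Phi> f) \<le> K * nrm2 f"
  shows "closed_subspace {f \<in> D. \<Phi> f \<in> Z}"
proof -
  have z: "\<Phi> (\<lambda>_. 0) = (\<lambda>_. 0)"
    using scale[of "\<lambda>_. 0" 0] cs_zero[OF D] by simp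
  have lim: "f \<in> D \<and> \<Phi> f \<in> Z" if F: "\<And>n. F n \<in> D \<and> \<Phi> (F n) \<in> Z" and f: "f \<in> l2"
    and c: "(\<lambda>n. nrm2 (\<lambda>i. F n i - f i)) \<longlonglongrightarrow> 0" for F f
  proof -
    have fD: "f \<in> D" using cs_lim[OF D _ f c] F by blast
    have eq: "\<Phi> (\<lambda>i. F n i - f i) = (\<lambda>k. \<Phi> (F n) k - \<Phi> f k)" for n
    proof -
      have "\<Phi> (\<lambda>i. F n i + (-1) * f i) = (\<lambda>k. \<Phi> (F n) k + \<Phi> (\<lambda>i. (-1) * f i) k)"
        using add[of "F n" "\<lambda>i. (-1) * f i"] F cs_scale[OF D fD] by blast
      then show ?thesis using scale[OF fD, of "-1"] by simp
    qed
    have b: "nrm2 (\<lambda>k. \<Phi> (F n) k - \<Phi> f k) \<le> K * nrm2 (\<lambda>i. F n i - f i)" for n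
    proof -
      have "(\<lambda>i. F n i - f i) \<in> D" using cs_diff[OF D] F fD by blast
      then have "nrm2 (\<Phi> (\<lambda>i. F n i - f i)) \<le> K * nrm2 (\<lambda>i. F n i - f i)" by (rule bound)
      then show ?thesis unfolding eq .
    qed
    have "(\<lambda>n. K * nrm2 (\<lambda>i. F n i - f i)) \<longlonglongrightarrow> K * 0" by (rule tendsto_mult[OF tendsto_const c])
    have "(\<lambda>n. nrm2 (\<lambda>k. \<Phi> (F n) k - \<Phi> f k)) \<longlonglongrightarrow> 0"
    proof (rule real_tendsto_sandwich[where f="\<lambda>_. 0" and h="\<lambda>n. K * nrm2 (\<lambda>i. F n i - f i)"])
      show "\<forall>\<^sub>F n in sequentially. 0 \<le> nrm2 (\<lambda>k. \<Phi> (F n) k - \<Phi> f k)"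
        by (simp add: nrm2_nonneg)
      show "\<forall>\<^sub>F n in sequentially. nrm2 (\<lambda>k. \<Phi> (F n) k - \<Phi> f k) \<le> K * nrm2 (\<lambda>i. F n i - f i)"
        using b by simp
      show "(\<lambda>n. 0) \<longlonglongrightarrow> 0" by simp
      show "(\<lambda>n. K * nrm2 (\<lambda>i. F n i - f i)) \<longlonglongrightarrow> 0" using \<open>_ \<longlonglongrightarrow> K * 0\<close> by simp
    qed
    then have "\<Phi> f \<in> Z"
      by (rule cs_lim[OF Z, of "\<lambda>n. \<Phi> (F n)", rotated 2]) (use F maps[OF fD] in auto)
    then show ?thesis using fD by blast
  qed
  show ?thesis
    unfolding closed_subspace_def
  proof (intro conjI allI impI ballI)
    show "{f \<in> D. \<Phi> f \<in> Z} \<subseteq> l2" using cs_l2[OF D] by blast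
    show "(\<lambda>_. 0) \<in> {f \<in> D. \<Phi> f \<in> Z}" using z cs_zero[OF D] cs_zero[OF Z] by simp
  next
    fix f g assume "f \<in> {f \<in> D. \<Phi> f \<in> Z}" "g \<in> {f \<in> D. \<Phi> f \<in> Z}"
    then show "(\<lambda>i. f i + g i) \<in> {f \<in> D. \<Phi> f \<in> Z}"
      using add cs_add[OF D] cs_add[OF Z] by auto
  next
    fix c f assume "f \<in> {f \<in> D. \<Phi> f \<in> Z}"
    then show "(\<lambda>i. c * f i) \<in> {f \<in> D. \<Phi> f \<in> Z}"
      using scale cs_scale[OF D] cs_scale[OF Z] by auto
  next
    fix F f assume "\<forall>n. F n \<in> {f \<in> D. \<Phi> f \<in> Z}" "f \<in> l2"
      "(\<lambda>n. norm_l2 (\<lambda>i. F n i - f i)) \<longlonglongrightarrow> 0"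
    then show "f \<in> {f \<in> D. \<Phi> f \<in> Z}"
      using lim[of F f] conv_iff[of "\<lambda>n i. F n i - f i"] by blast
  qed
qed

lemma cs_eq:
  assumes D: "closed_subspace D"
    and maps1: "\<And>f. f \<in> D \<Longrightarrow> \<Phi>1 f \<in> l2"
    and add1: "\<And>f g. f \<in> D \<Longrightarrow> g \<in> D \<Longrightarrow> \<Phi>1 (\<lambda>i. f i + g i) = (\<lambda>k. \<Phi>1 f k + \<Phi>1 g k)"
    and scale1: "\<And>c f. f \<in> D \<Longrightarrow> \<Phi>1 (\<lambda>i. c * f i) = (\<lambda>k. c * \<Phi>1 f k)"
    and bound1: "\<And>f. f \<in> D \<Longrightarrow> nrm2 (\<Phi>1 f) \<le> K1 * nrm2 f"
    and maps2: "\<And>f. f \<in> D \<Longrightarrow> \<Phi>2 f \<in> l2"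
    and add2: "\<And>f g. f \<in> D \<Longrightarrow> g \<in> D \<Longrightarrow> \<Phi>2 (\<lambda>i. f i + g i) = (\<lambda>k. \<Phi>2 f k + \<Phi>2 g k)"
    and scale2: "\<And>c f. f \<in> D \<Longrightarrow> \<Phi>2 (\<lambda>i. c * f i) = (\<lambda>k. c * \<Phi>2 f k)"
    and bound2: "\<And>f. f \<in> D \<Longrightarrow> nrm2 (\<Phi>2 f) \<le> K2 * nrm2 f"
  shows "closed_subspace {f \<in> D. \<Phi>1 f = \<Phi>2 f}"
proof -
  have "closed_subspace {f \<in> D. (\<lambda>k. \<Phi>1 f k - \<Phi>2 f k) \<in> {(\<lambda>_. 0)}}"
  proof (rule cs_preimage[OF D cs_zero_space, where K="2 * K1 + 2 * K2"])
    fix f assume f: "f \<in> D"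
    show "(\<lambda>k. \<Phi>1 f k - \<Phi>2 f k) \<in> l2" using maps1 maps2 f l2_diff by blast
    have "nrm2 (\<lambda>k. \<Phi>1 f k - \<Phi>2 f k) \<le> 2 * nrm2 (\<Phi>1 f) + 2 * nrm2 (\<Phi>2 f)"
      using nrm2_diff_le maps1 maps2 f by blast
    also have "\<dots> \<le> 2 * (K1 * nrm2 f) + 2 * (K2 * nrm2 f)"
      using bound1[OF f] bound2[OF f] by linarith
    finally show "nrm2 (\<lambda>k. \<Phi>1 f k - \<Phi>2 f k) \<le> (2 * K1 + 2 * K2) * nrm2 f"
      by (simp add: algebra_simps)
    fix c show "(\<lambda>k. \<Phi>1 (\<lambda>i. c * f i) k - \<Phi>2 (\<lambda>i. c * f i) k) = (\<lambda>k. c * (\<Phi>1 f k - \<Phi>2 f k))"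
      using scale1[OF f] scale2[OF f] by (simp add: algebra_simps)
  next
    fix f g assume "f \<in> D" "g \<in> D"
    then show "(\<lambda>k. \<Phi>1 (\<lambda>i. f i + g i) k - \<Phi>2 (\<lambda>i. f i + g i) k) =
      (\<lambda>k. (\<Phi>1 f k - \<Phi>2 f k) + (\<Phi>1 g k - \<Phi>2 g k))"
      using add1 add2 by (simp add: algebra_simps)
  qed
  moreover have "(\<lambda>k. \<Phi>1 f k - \<Phi>2 f k) \<in> {(\<lambda>_. 0)} \<longleftrightarrow> \<Phi>1 f = \<Phi>2 f" for f
    by (auto simp: fun_eq_iff)
  ultimately show ?thesis by simp
qed

lemma row_l2: assumes "g \<in> l2" shows "(\<lambda>j. g (i,j)) \<in> l2"
proof -
  have s: "(\<lambda>p. (cmod (g p))^2) summable_on UNIV" using assms by (simp add: l2_def)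
  have "(\<lambda>p. (cmod (g p))^2) summable_on range (Pair i)" by (rule summable_on_subset[OF s]) simp
  then have "((\<lambda>p. (cmod (g p))^2) \<circ> Pair i) summable_on UNIV"
    by (subst summable_on_reindex[symmetric]) (auto simp: inj_on_def)
  then show ?thesis by (simp add: l2_def comp_def)
qed

lemma swap_bij: "bij_betw (\<lambda>(x,y). (y,x)) UNIV UNIV"
  by (rule bij_betwI[of _ _ _ "\<lambda>(x,y). (y,x)"]) auto

definition swp :: "('a \<times> 'b \<Rightarrow> complex) \<Rightarrow> ('b \<times> 'a \<Rightarrow> complex)" where
  "swp g = (\<lambda>(j,i). g (i,j))"

lemma swp_l2: "g \<in> l2 \<Longrightarrow> swp g \<in> l2"
  unfolding l2_def swp_def
  using summable_on_reindex_bij_betw[OF swap_bij, of "\<lambda>p. (cmod (g p))^2"]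
  by (simp add: case_prod_beta)

lemma nrm2_swp: "nrm2 (swp g) = nrm2 g"
  unfolding nrm2_def swp_def
  using infsum_reindex_bij_betw[OF swap_bij, of "\<lambda>p. (cmod (g p))^2"]
  by (simp add: case_prod_beta)

lemma col_l2: assumes "g \<in> l2" shows "(\<lambda>i. g (i,j)) \<in> l2"
  using row_l2[OF swp_l2[OF assms], of j] by (simp add: swp_def)

lemma nrm2_rows:
  assumes "g \<in> l2"
  shows "(\<lambda>i. nrm2 (\<lambda>j. g (i,j))) summable_on UNIV"
    and "nrm2 g = infsum (\<lambda>i. nrm2 (\<lambda>j. g (i,j))) UNIV"
proof -
  have e: "(\<lambda>(i,j). (cmod (g (i,j)))^2) = (\<lambda>p. (cmod (g p))^2)" by auto
  have s: "(\<lambda>(i,j). (cmod (g (i,j)))^2) summable_on (Sigma UNIV (\<lambda>_. UNIV))"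
    unfolding e using assms by (simp add: l2_def)
  show "(\<lambda>i. nrm2 (\<lambda>j. g (i,j))) summable_on UNIV"
    using summable_on_Sigma_banach[OF s] by (simp add: nrm2_def)
  show "nrm2 g = infsum (\<lambda>i. nrm2 (\<lambda>j. g (i,j))) UNIV"
    using infsum_Sigma'_banach[OF s] unfolding e by (simp add: nrm2_def)
qed

lemma nrm2_cols:
  assumes "g \<in> l2"
  shows "(\<lambda>j. nrm2 (\<lambda>i. g (i,j))) summable_on UNIV"
    and "nrm2 g = infsum (\<lambda>j. nrm2 (\<lambda>i. g (i,j))) UNIV"
  using nrm2_rows[OF swp_l2[OF assms]] nrm2_swp[of g] by (simp_all add: swp_def)

lemma l2_of_rows:
  assumes r: "\<And>i. (\<lambda>j. g (i,j)) \<in> l2" and s: "(\<lambda>i. nrm2 (\<lambda>j. g (i,j))) summable_on UNIV"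
  shows "g \<in> l2"
proof -
  have "(\<lambda>p. (cmod (g p))^2) summable_on Sigma UNIV (\<lambda>_. UNIV)"
  proof (rule summable_on_SigmaI[where g="\<lambda>i. nrm2 (\<lambda>j. g (i,j))"])
    fix i :: 'a
    show "((\<lambda>j. (cmod (g (i, j)))^2) has_sum nrm2 (\<lambda>j. g (i,j))) UNIV"
      using r[of i] unfolding nrm2_def l2_def by (simp add: has_sum_infsum)
  qed (use s in auto)
  then show ?thesis by (simp add: l2_def)
qed

lemma l2_of_cols:
  assumes r: "\<And>j. (\<lambda>i. g (i,j)) \<in> l2" and s: "(\<lambda>j. nrm2 (\<lambda>i. g (i,j))) summable_on UNIV"
  shows "g \<in> l2"
proof -
  have "swp g \<in> l2" by (rule l2_of_rows) (use r s in \<open>auto simp: swp_def\<close>)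
  then have "swp (swp g) \<in> l2" by (rule swp_l2)
  then show ?thesis by (simp add: swp_def)
qed

section \<open>Contractions\<close>

definition contr :: "('b \<Rightarrow> complex) \<Rightarrow> ('a \<times> 'b \<Rightarrow> complex) \<Rightarrow> ('a \<Rightarrow> complex)" where
  "contr x g = (\<lambda>i. inner_l2 x (\<lambda>j. g (i,j)))"

definition contr1 :: "('a \<Rightarrow> complex) \<Rightarrow> ('a \<times> 'b \<Rightarrow> complex) \<Rightarrow> ('b \<Rightarrow> complex)" where
  "contr1 y g = (\<lambda>j. inner_l2 y (\<lambda>i. g (i,j)))"

lemma contr1_swp: "contr1 y g = contr y (swp g)"
  by (simp add: contr_def contr1_def swp_def)

lemma contr_bound:
  assumes x: "x \<in> l2" and g: "g \<in> l2"
  shows "contr x g \<in> l2" and "nrm2 (contr x g) \<le> nrm2 x * nrm2 g"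
proof -
  have le: "(cmod (contr x g i))^2 \<le> nrm2 x * nrm2 (\<lambda>j. g (i,j))" for i
    unfolding contr_def using cauchy_schwarz[OF x row_l2[OF g]] by simp
  have s: "(\<lambda>i. nrm2 x * nrm2 (\<lambda>j. g (i,j))) summable_on UNIV"
    using nrm2_rows(1)[OF g] by (rule summable_on_cmult_right)
  have s2: "(\<lambda>i. (cmod (contr x g i))^2) summable_on UNIV"
    by (rule summable_on_comparison_test[OF s]) (use le in auto)
  then show "contr x g \<in> l2" by (simp add: l2_def)
  have "nrm2 (contr x g) \<le> infsum (\<lambda>i. nrm2 x * nrm2 (\<lambda>j. g (i,j))) UNIV"
    using infsum_mono[OF s2 s le] by (simp add: nrm2_def)
  also have "\<dots> = nrm2 x * nrm2 g"
    using nrm2_rows(2)[OF g] by (simp add: infsum_cmult_right')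
  finally show "nrm2 (contr x g) \<le> nrm2 x * nrm2 g" .
qed

lemma contr1_bound:
  assumes y: "y \<in> l2" and g: "g \<in> l2"
  shows "contr1 y g \<in> l2" and "nrm2 (contr1 y g) \<le> nrm2 y * nrm2 g"
  using contr_bound[OF y swp_l2[OF g]] nrm2_swp[of g] by (simp_all add: contr1_swp)

lemma contr_add:
  assumes "x \<in> l2" "g \<in> l2" "h \<in> l2"
  shows "contr x (\<lambda>p. g p + h p) = (\<lambda>i. contr x g i + contr x h i)"
  unfolding contr_def using inner_add_right[OF assms(1) row_l2[OF assms(2)] row_l2[OF assms(3)]] by simp

lemma contr_scale: "contr x (\<lambda>p. c * g p) = (\<lambda>i. c * contr x g i)"
  unfolding contr_def by (simp add: inner_scale_right)

lemma contr1_add: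
  assumes "y \<in> l2" "g \<in> l2" "h \<in> l2"
  shows "contr1 y (\<lambda>p. g p + h p) = (\<lambda>i. contr1 y g i + contr1 y h i)"
  unfolding contr1_def using inner_add_right[OF assms(1) col_l2[OF assms(2)] col_l2[OF assms(3)]] by simp

lemma contr1_scale: "contr1 y (\<lambda>p. c * g p) = (\<lambda>i. c * contr1 y g i)"
  unfolding contr1_def by (simp add: inner_scale_right)

lemma contr_addx:
  assumes "x \<in> l2" "y \<in> l2" "g \<in> l2"
  shows "contr (\<lambda>j. x j + y j) g = (\<lambda>i. contr x g i + contr y g i)"
  unfolding contr_def using inner_add_left[OF assms(1,2) row_l2[OF assms(3)]] by simp

lemma contr_scalex: "contr (\<lambda>j. c * x j) g = (\<lambda>i. cnj c * contr x g i)"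
  unfolding contr_def by (simp add: inner_scale_left)

lemma contr1_addx:
  assumes "x \<in> l2" "y \<in> l2" "g \<in> l2"
  shows "contr1 (\<lambda>j. x j + y j) g = (\<lambda>i. contr1 x g i + contr1 y g i)"
  unfolding contr1_def using inner_add_left[OF assms(1,2) col_l2[OF assms(3)]] by simp

lemma contr1_scalex: "contr1 (\<lambda>j. c * x j) g = (\<lambda>i. cnj c * contr1 x g i)"
  unfolding contr1_def by (simp add: inner_scale_left)

lemma contr_tensor: "contr x (tensor_vec a b) = (\<lambda>i. inner_l2 x b * a i)"
  unfolding contr_def tensor_vec_def using inner_scale_right[of x "a _" b] by (simp add: mult.commute)

lemma contr1_tensor: "contr1 y (tensor_vec a b) = (\<lambda>j. inner_l2 y a * b j)"
  unfolding contr1_def tensor_vec_def using inner_scale_right[of y "b _" a] by (simp add: mult.commute)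

lemma inner_contr:
  assumes y: "y \<in> l2" and x: "x \<in> l2" and g: "g \<in> l2"
  shows "inner_l2 y (contr x g) = inner_l2 (tensor_vec y x) g"
proof -
  have s: "(\<lambda>(i,j). cnj (y i) * (cnj (x j) * g (i,j))) summable_on Sigma UNIV (\<lambda>_. UNIV)"
    using summable_inner[OF l2_tensor[OF y x] g]
    by (simp add: tensor_vec_def case_prod_unfold mult.assoc)
  have "inner_l2 y (contr x g) = infsum (\<lambda>i. infsum (\<lambda>j. cnj (y i) * (cnj (x j) * g (i,j))) UNIV) UNIV"
    unfolding inner_l2_def contr_def by (simp add: infsum_cmult_right')
  also have "\<dots> = infsum (\<lambda>(i,j). cnj (y i) * (cnj (x j) * g (i,j))) UNIV"
    using infsum_Sigma'_banach[OF s] by simp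
  also have "\<dots> = inner_l2 (tensor_vec y x) g"
    unfolding inner_l2_def tensor_vec_def by (intro infsum_cong) (auto simp: mult.assoc)
  finally show ?thesis .
qed

lemma inner_tensor_swp: "inner_l2 (tensor_vec y x) g = inner_l2 (tensor_vec x y) (swp g)"
proof -
  let ?f = "\<lambda>q. cnj (x (fst q) * y (snd q)) * g (snd q, fst q)"
  have "infsum (\<lambda>p. ?f ((\<lambda>(a,b). (b,a)) p)) UNIV = infsum ?f UNIV"
    by (rule infsum_reindex_bij_betw[OF swap_bij])
  moreover have "inner_l2 (tensor_vec y x) g = infsum (\<lambda>p. ?f ((\<lambda>(a,b). (b,a)) p)) UNIV"
    unfolding inner_l2_def tensor_vec_def by (intro infsum_cong) (auto simp: mult.commute)
  moreover have "inner_l2 (tensor_vec x y) (swp g) = infsum ?f UNIV"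
    unfolding inner_l2_def tensor_vec_def swp_def by (intro infsum_cong) (auto simp: mult.commute)
  ultimately show ?thesis by simp
qed

lemma inner_contr1:
  assumes y: "y \<in> l2" and x: "x \<in> l2" and g: "g \<in> l2"
  shows "inner_l2 x (contr1 y g) = inner_l2 (tensor_vec y x) g"
  using inner_contr[OF x y swp_l2[OF g]] inner_tensor_swp[of y x g] by (simp add: contr1_swp)

lemma contr_in:
  fixes E :: "('a \<Rightarrow> complex) set" and F :: "('b \<Rightarrow> complex) set"
  assumes E: "closed_subspace E" and F: "closed_subspace F" and x: "x \<in> l2"
    and f: "f \<in> htensor E F"
  shows "contr x f \<in> E"
proof -
  have "htensor E F \<subseteq> {f \<in> l2. contr x f \<in> E}"
  proof (rule htensor_sub)
    show "closed_subspace {f \<in> l2. contr x f \<in> E}"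
    proof (rule cs_preimage[OF cs_l2_whole E, where K="nrm2 x"])
      fix f :: "'a \<times> 'b \<Rightarrow> complex" assume f: "f \<in> l2"
      show "contr x f \<in> l2" by (rule contr_bound(1)[OF x f])
      show "nrm2 (contr x f) \<le> nrm2 x * nrm2 f" by (rule contr_bound(2)[OF x f])
      fix cc show "contr x (\<lambda>i. cc * f i) = (\<lambda>k. cc * contr x f k)" by (rule contr_scale)
    next
      fix f g :: "'a \<times> 'b \<Rightarrow> complex" assume "f \<in> l2" "g \<in> l2"
      then show "contr x (\<lambda>i. f i + g i) = (\<lambda>k. contr x f k + contr x g k)" by (rule contr_add[OF x])
    qed
    fix a b assume "a \<in> E" "b \<in> F"
    then show "tensor_vec a b \<in> {f \<in> l2. contr x f \<in> E}"
    proof -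
      have "tensor_vec a b \<in> l2" using l2_tensor cs_l2[OF E] cs_l2[OF F] \<open>a \<in> E\<close> \<open>b \<in> F\<close> by blast
      moreover have "contr x (tensor_vec a b) \<in> E"
        unfolding contr_tensor using cs_scale[OF E] \<open>a \<in> E\<close> \<open>b \<in> F\<close> by blast
      ultimately show ?thesis by blast
    qed
  qed
  then show ?thesis using f by blast
qed

lemma contr1_in:
  fixes E :: "('a \<Rightarrow> complex) set" and F :: "('b \<Rightarrow> complex) set"
  assumes E: "closed_subspace E" and F: "closed_subspace F" and y: "y \<in> l2"
    and f: "f \<in> htensor E F"
  shows "contr1 y f \<in> F"
proof -
  have "htensor E F \<subseteq> {f \<in> l2. contr1 y f \<in> F}"
  proof (rule htensor_sub)
    show "closed_subspace {f \<in> l2. contr1 y f \<in> F}"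
    proof (rule cs_preimage[OF cs_l2_whole F, where K="nrm2 y"])
      fix f :: "'a \<times> 'b \<Rightarrow> complex" assume f: "f \<in> l2"
      show "contr1 y f \<in> l2" by (rule contr1_bound(1)[OF y f])
      show "nrm2 (contr1 y f) \<le> nrm2 y * nrm2 f" by (rule contr1_bound(2)[OF y f])
      fix cc show "contr1 y (\<lambda>i. cc * f i) = (\<lambda>k. cc * contr1 y f k)" by (rule contr1_scale)
    next
      fix f g :: "'a \<times> 'b \<Rightarrow> complex" assume "f \<in> l2" "g \<in> l2"
      then show "contr1 y (\<lambda>i. f i + g i) = (\<lambda>k. contr1 y f k + contr1 y g k)" by (rule contr1_add[OF y])
    qed
    fix a b assume "a \<in> E" "b \<in> F"
    then show "tensor_vec a b \<in> {f \<in> l2. contr1 y f \<in> F}"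
    proof -
      have "tensor_vec a b \<in> l2" using l2_tensor cs_l2[OF E] cs_l2[OF F] \<open>a \<in> E\<close> \<open>b \<in> F\<close> by blast
      moreover have "contr1 y (tensor_vec a b) \<in> F"
        unfolding contr1_tensor using cs_scale[OF F] \<open>a \<in> E\<close> \<open>b \<in> F\<close> by blast
      ultimately show ?thesis by blast
    qed
  qed
  then show ?thesis using f by blast
qed

lemma contr_delta: "contr (delta j) g = (\<lambda>i. g (i,j))"
  by (simp add: contr_def inner_delta)

lemma contr1_delta: "contr1 (delta i) g = (\<lambda>j. g (i,j))"
  by (simp add: contr1_def inner_delta)

lemma col_in:
  assumes "closed_subspace E" "closed_subspace F" "f \<in> htensor E F"
  shows "(\<lambda>i. f (i,j)) \<in> E"
  using contr_in[OF assms(1,2) delta_l2 assms(3), of j] by (simp add: contr_delta)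

lemma row_in:
  assumes "closed_subspace E" "closed_subspace F" "f \<in> htensor E F"
  shows "(\<lambda>j. f (i,j)) \<in> F"
  using contr1_in[OF assms(1,2) delta_l2 assms(3), of i] by (simp add: contr1_delta)

section \<open>Unitaries\<close>

lemma ub_in: "unitary_between A B W \<Longrightarrow> x \<in> A \<Longrightarrow> W x \<in> B"
  unfolding unitary_between_def by blast

lemma ub_add: "unitary_between A B W \<Longrightarrow> x \<in> A \<Longrightarrow> y \<in> A \<Longrightarrow> W (\<lambda>i. x i + y i) = (\<lambda>k. W x k + W y k)"
  unfolding unitary_between_def by blast

lemma ub_scale: "unitary_between A B W \<Longrightarrow> x \<in> A \<Longrightarrow> W (\<lambda>i. c * x i) = (\<lambda>k. c * W x k)"
  unfolding unitary_between_def by blast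

lemma ub_inner: "unitary_between A B W \<Longrightarrow> x \<in> A \<Longrightarrow> y \<in> A \<Longrightarrow> inner_l2 (W x) (W y) = inner_l2 x y"
  unfolding unitary_between_def by blast

lemma ub_nrm2:
  assumes "unitary_between A B W" "closed_subspace A" "closed_subspace B" "x \<in> A"
  shows "nrm2 (W x) = nrm2 x"
proof -
  have "complex_of_real (nrm2 (W x)) = complex_of_real (nrm2 x)"
  proof -
    have "W x \<in> l2" using cs_l2[OF assms(3) ub_in[OF assms(1,4)]] .
    moreover have "x \<in> l2" using cs_l2[OF assms(2) assms(4)] .
    ultimately show ?thesis using inner_self[of "W x"] inner_self[of x] ub_inner[OF assms(1,4,4)] by simp
  qed
  then show ?thesis by simp
qed

lemma ub_zero: "unitary_between A B W \<Longrightarrow> closed_subspace A \<Longrightarrow> W (\<lambda>_. 0) = (\<lambda>_. 0)"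
  using ub_scale[of A B W "\<lambda>_. 0" 0] cs_zero[of A] by simp

lemma ub_diff: "unitary_between A B W \<Longrightarrow> closed_subspace A \<Longrightarrow> x \<in> A \<Longrightarrow> y \<in> A \<Longrightarrow>
   W (\<lambda>i. x i - y i) = (\<lambda>k. W x k - W y k)"
proof -
  assume u: "unitary_between A B W" and A: "closed_subspace A" and x: "x \<in> A" and y: "y \<in> A"
  have "W (\<lambda>i. x i + (-1) * y i) = (\<lambda>k. W x k + W (\<lambda>i. (-1) * y i) k)"
    using ub_add[OF u x cs_scale[OF A y]] .
  then show ?thesis using ub_scale[OF u y, of "-1"] by simp
qed

section \<open>The map H\<close>

locale hsetup =
  fixes E0 :: "('i \<Rightarrow> complex) set" and F0 :: "('j \<Rightarrow> complex) set"
    and E1 :: "('k \<Rightarrow> complex) set" and F1 :: "('l \<Rightarrow> complex) set"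
    and WE :: "('i \<Rightarrow> complex) \<Rightarrow> ('k \<Rightarrow> complex)"
    and WF :: "('j \<Rightarrow> complex) \<Rightarrow> ('l \<Rightarrow> complex)"
  assumes E0: "closed_subspace E0" and F0: "closed_subspace F0"
    and E1: "closed_subspace E1" and F1: "closed_subspace F1"
    and UE: "unitary_between E0 E1 WE" and UF: "unitary_between F0 F1 WF"
begin

definition RT :: "('i \<times> 'j \<Rightarrow> complex) \<Rightarrow> ('i \<times> 'l \<Rightarrow> complex)" where
  "RT f = right_tensor WF f"

definition H :: "('i \<times> 'j \<Rightarrow> complex) \<Rightarrow> ('k \<times> 'l \<Rightarrow> complex)" where
  "H f = left_tensor WE (RT f)"

abbreviation "T0 \<equiv> htensor E0 F0"

lemma T0: "closed_subspace T0"
  by (rule htensor_cs) (use cs_l2[OF E0] cs_l2[OF F0] in blast)+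

lemma RT_row: "(\<lambda>k. RT f (i,k)) = WF (\<lambda>j. f (i,j))"
  by (simp add: RT_def right_tensor_def)

lemma H_col: "(\<lambda>z. H f (z,k)) = WE (\<lambda>i. RT f (i,k))"
  by (simp add: H_def left_tensor_def)

lemma rowT: "f \<in> T0 \<Longrightarrow> (\<lambda>j. f (i,j)) \<in> F0"
  by (rule row_in[OF E0 F0])

lemma WF_l2: "y \<in> F0 \<Longrightarrow> WF y \<in> l2"
  by (rule cs_l2[OF F1 ub_in[OF UF]])

lemma WE_l2: "y \<in> E0 \<Longrightarrow> WE y \<in> l2"
  by (rule cs_l2[OF E1 ub_in[OF UE]])

lemma WF_nrm2: "y \<in> F0 \<Longrightarrow> nrm2 (WF y) = nrm2 y"
  by (rule ub_nrm2[OF UF F0 F1])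

lemma WE_nrm2: "y \<in> E0 \<Longrightarrow> nrm2 (WE y) = nrm2 y"
  by (rule ub_nrm2[OF UE E0 E1])

lemma WF_coord: "y \<in> F0 \<Longrightarrow> (cmod (WF y k))^2 \<le> nrm2 y"
  using coord_le[OF WF_l2, of y k] WF_nrm2[of y] by simp

lemma RT_add: "f \<in> T0 \<Longrightarrow> g \<in> T0 \<Longrightarrow> RT (\<lambda>p. f p + g p) = (\<lambda>q. RT f q + RT g q)"
proof (rule ext, clarify)
  fix i k assume f: "f \<in> T0" and g: "g \<in> T0"
  have "WF (\<lambda>j. f (i,j) + g (i,j)) = (\<lambda>k. WF (\<lambda>j. f (i,j)) k + WF (\<lambda>j. g (i,j)) k)"
    using ub_add[OF UF rowT[OF f] rowT[OF g]] .
  then show "RT (\<lambda>p. f p + g p) (i,k) = RT f (i,k) + RT g (i,k)"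
    by (simp add: RT_def right_tensor_def)
qed

lemma RT_scale: "f \<in> T0 \<Longrightarrow> RT (\<lambda>p. c * f p) = (\<lambda>q. c * RT f q)"
proof (rule ext, clarify)
  fix i k assume f: "f \<in> T0"
  have "WF (\<lambda>j. c * f (i,j)) = (\<lambda>k. c * WF (\<lambda>j. f (i,j)) k)"
    using ub_scale[OF UF rowT[OF f]] .
  then show "RT (\<lambda>p. c * f p) (i,k) = c * RT f (i,k)"
    by (simp add: RT_def right_tensor_def)
qed

lemma RT_l2: assumes f: "f \<in> T0" shows "RT f \<in> l2" and "nrm2 (RT f) = nrm2 f"
proof -
  have fl: "f \<in> l2" using f cs_l2[OF T0] by blast
  have rows: "(\<lambda>k. RT f (i,k)) \<in> l2" for i
    unfolding RT_row using WF_l2[OF rowT[OF f]] .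
  have eq: "nrm2 (\<lambda>k. RT f (i,k)) = nrm2 (\<lambda>j. f (i,j))" for i
    unfolding RT_row using WF_nrm2[OF rowT[OF f]] .
  have s: "(\<lambda>i. nrm2 (\<lambda>k. RT f (i,k))) summable_on UNIV"
    unfolding eq by (rule nrm2_rows(1)[OF fl])
  show l: "RT f \<in> l2" by (rule l2_of_rows[OF rows s])
  show "nrm2 (RT f) = nrm2 f"
    unfolding nrm2_rows(2)[OF l] nrm2_rows(2)[OF fl] eq ..
qed

lemma RT_col_l2: assumes f: "f \<in> T0" shows "(\<lambda>i. RT f (i,k)) \<in> l2"
    and "nrm2 (\<lambda>i. RT f (i,k)) \<le> nrm2 f"
proof -
  have fl: "f \<in> l2" using f cs_l2[OF T0] by blast
  show "(\<lambda>i. RT f (i,k)) \<in> l2" using col_l2[OF RT_l2(1)[OF f]] .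
  have "nrm2 (\<lambda>i. RT f (i,k)) = infsum (\<lambda>i. (cmod (WF (\<lambda>j. f (i,j)) k))^2) UNIV"
    by (simp add: nrm2_def RT_def right_tensor_def)
  also have "\<dots> \<le> infsum (\<lambda>i. nrm2 (\<lambda>j. f (i,j))) UNIV"
  proof (rule infsum_mono)
    show "(\<lambda>i. nrm2 (\<lambda>j. f (i,j))) summable_on UNIV" by (rule nrm2_rows(1)[OF fl])
    show "(\<lambda>i. (cmod (WF (\<lambda>j. f (i,j)) k))^2) summable_on UNIV"
      using col_l2[OF RT_l2(1)[OF f], of k] by (simp add: l2_def RT_def right_tensor_def)
    show "(cmod (WF (\<lambda>j. f (i,j)) k))^2 \<le> nrm2 (\<lambda>j. f (i,j))" for i
      by (rule WF_coord[OF rowT[OF f]])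
  qed
  also have "\<dots> = nrm2 f" using nrm2_rows(2)[OF fl] by simp
  finally show "nrm2 (\<lambda>i. RT f (i,k)) \<le> nrm2 f" .
qed

lemma RT_col_in: assumes f: "f \<in> T0" shows "(\<lambda>i. RT f (i,k)) \<in> E0"
proof -
  have "T0 \<subseteq> {f \<in> T0. (\<lambda>i. RT f (i,k)) \<in> E0}"
  proof (rule htensor_sub)
    show "closed_subspace {f \<in> T0. (\<lambda>i. RT f (i,k)) \<in> E0}"
    proof (rule cs_preimage[OF T0 E0, where K=1])
      fix f assume f: "f \<in> T0"
      show "(\<lambda>i. RT f (i,k)) \<in> l2" by (rule RT_col_l2(1)[OF f])
      show "nrm2 (\<lambda>i. RT f (i,k)) \<le> 1 * nrm2 f" using RT_col_l2(2)[OF f] by simp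
      fix c show "(\<lambda>i. RT (\<lambda>i. c * f i) (i,k)) = (\<lambda>i. c * RT f (i,k))"
        using RT_scale[OF f] by simp
    next
      fix f g assume "f \<in> T0" "g \<in> T0"
      then show "(\<lambda>i. RT (\<lambda>i. f i + g i) (i,k)) = (\<lambda>i. RT f (i,k) + RT g (i,k))"
        using RT_add by simp
    qed
    fix a b assume a: "a \<in> E0" and b: "b \<in> F0"
    have "(\<lambda>i. RT (tensor_vec a b) (i,k)) = (\<lambda>i. WF b k * a i)"
    proof
      fix i
      have "WF (\<lambda>j. a i * b j) = (\<lambda>k. a i * WF b k)" by (rule ub_scale[OF UF b])
      then show "RT (tensor_vec a b) (i,k) = WF b k * a i"
        by (simp add: RT_def right_tensor_def tensor_vec_def mult.commute)
    qed
    then show "tensor_vec a b \<in> {f \<in> T0. (\<lambda>i. RT f (i,k)) \<in> E0}"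
      using cs_scale[OF E0 a] tensor_in_htensor[OF a b] by simp
  qed
  then show ?thesis using f by blast
qed

lemma H_l2: assumes f: "f \<in> T0" shows "H f \<in> l2" and "nrm2 (H f) = nrm2 f"
proof -
  have rl: "RT f \<in> l2" by (rule RT_l2(1)[OF f])
  have cols: "(\<lambda>z. H f (z,k)) \<in> l2" for k
    unfolding H_col using WE_l2[OF RT_col_in[OF f]] .
  have eq: "nrm2 (\<lambda>z. H f (z,k)) = nrm2 (\<lambda>i. RT f (i,k))" for k
    unfolding H_col using WE_nrm2[OF RT_col_in[OF f]] .
  have s: "(\<lambda>k. nrm2 (\<lambda>z. H f (z,k))) summable_on UNIV"
    unfolding eq by (rule nrm2_cols(1)[OF rl])
  show l: "H f \<in> l2" by (rule l2_of_cols[OF cols s])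
  show "nrm2 (H f) = nrm2 f"
    unfolding nrm2_cols(2)[OF l] eq nrm2_cols(2)[OF rl, symmetric] RT_l2(2)[OF f] ..
qed

lemma H_add: assumes f: "f \<in> T0" and g: "g \<in> T0"
  shows "H (\<lambda>p. f p + g p) = (\<lambda>q. H f q + H g q)"
proof (rule ext, clarify)
  fix z k
  have "WE (\<lambda>i. RT f (i,k) + RT g (i,k)) = (\<lambda>z. WE (\<lambda>i. RT f (i,k)) z + WE (\<lambda>i. RT g (i,k)) z)"
    by (rule ub_add[OF UE RT_col_in[OF f] RT_col_in[OF g]])
  then show "H (\<lambda>p. f p + g p) (z,k) = H f (z,k) + H g (z,k)"
    by (simp add: H_def left_tensor_def RT_add[OF f g])
qed

lemma H_scale: assumes f: "f \<in> T0"
  shows "H (\<lambda>p. c * f p) = (\<lambda>q. c * H f q)"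
proof (rule ext, clarify)
  fix z k
  have "WE (\<lambda>i. c * RT f (i,k)) = (\<lambda>z. c * WE (\<lambda>i. RT f (i,k)) z)"
    by (rule ub_scale[OF UE RT_col_in[OF f]])
  then show "H (\<lambda>p. c * f p) (z,k) = c * H f (z,k)"
    by (simp add: H_def left_tensor_def RT_scale[OF f])
qed

lemma H_tensor: assumes a: "a \<in> E0" and b: "b \<in> F0"
  shows "H (tensor_vec a b) = tensor_vec (WE a) (WF b)"
proof (rule ext, clarify)
  fix z k
  have c: "(\<lambda>i. RT (tensor_vec a b) (i,k)) = (\<lambda>i. WF b k * a i)"
  proof
    fix i
    have "WF (\<lambda>j. a i * b j) = (\<lambda>k. a i * WF b k)" by (rule ub_scale[OF UF b])
    then show "RT (tensor_vec a b) (i,k) = WF b k * a i"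
      by (simp add: RT_def right_tensor_def tensor_vec_def mult.commute)
  qed
  have "WE (\<lambda>i. WF b k * a i) = (\<lambda>z. WF b k * WE a z)" by (rule ub_scale[OF UE a])
  then show "H (tensor_vec a b) (z,k) = tensor_vec (WE a) (WF b) (z,k)"
    using c by (simp add: H_def left_tensor_def tensor_vec_def mult.commute)
qed

end

context hsetup begin

lemma comm:
  assumes x: "x \<in> F0" and f: "f \<in> T0"
  shows "WE (contr x f) = contr (WF x) (H f)"
proof -
  have xl: "x \<in> l2" using cs_l2[OF F0 x] .
  have Xl: "WF x \<in> l2" by (rule WF_l2[OF x])
  have "T0 \<subseteq> {f \<in> T0. WE (contr x f) = contr (WF x) (H f)}"
  proof (rule htensor_sub)
    show "closed_subspace {f \<in> T0. WE (contr x f) = contr (WF x) (H f)}"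
    proof (rule cs_eq[OF T0, where ?K1.0="nrm2 x" and ?K2.0="nrm2 x"])
      fix f assume f: "f \<in> T0"
      have fl: "f \<in> l2" using cs_l2[OF T0 f] .
      have cin: "contr x f \<in> E0" by (rule contr_in[OF E0 F0 xl f])
      show "WE (contr x f) \<in> l2" by (rule WE_l2[OF cin])
      show "nrm2 (WE (contr x f)) \<le> nrm2 x * nrm2 f"
        using WE_nrm2[OF cin] contr_bound(2)[OF xl fl] by simp
      show "contr (WF x) (H f) \<in> l2" by (rule contr_bound(1)[OF Xl H_l2(1)[OF f]])
      show "nrm2 (contr (WF x) (H f)) \<le> nrm2 x * nrm2 f"
        using contr_bound(2)[OF Xl H_l2(1)[OF f]] WF_nrm2[OF x] H_l2(2)[OF f] by simp
      fix c
      show "WE (contr x (\<lambda>i. c * f i)) = (\<lambda>k. c * WE (contr x f) k)"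
        unfolding contr_scale by (rule ub_scale[OF UE cin])
      show "contr (WF x) (H (\<lambda>i. c * f i)) = (\<lambda>k. c * contr (WF x) (H f) k)"
        unfolding H_scale[OF f] by (rule contr_scale)
    next
      fix f g assume f: "f \<in> T0" and g: "g \<in> T0"
      have fl: "f \<in> l2" using cs_l2[OF T0 f] .
      have gl: "g \<in> l2" using cs_l2[OF T0 g] .
      show "WE (contr x (\<lambda>i. f i + g i)) = (\<lambda>k. WE (contr x f) k + WE (contr x g) k)"
        unfolding contr_add[OF xl fl gl]
        by (rule ub_add[OF UE contr_in[OF E0 F0 xl f] contr_in[OF E0 F0 xl g]])
      show "contr (WF x) (H (\<lambda>i. f i + g i)) = (\<lambda>k. contr (WF x) (H f) k + contr (WF x) (H g) k)"
        unfolding H_add[OF f g] by (rule contr_add[OF Xl H_l2(1)[OF f] H_l2(1)[OF g]])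
    qed
    fix a b assume a: "a \<in> E0" and b: "b \<in> F0"
    have "WE (contr x (tensor_vec a b)) = (\<lambda>z. inner_l2 x b * WE a z)"
      unfolding contr_tensor by (rule ub_scale[OF UE a])
    moreover have "contr (WF x) (H (tensor_vec a b)) = (\<lambda>z. inner_l2 x b * WE a z)"
      unfolding H_tensor[OF a b] contr_tensor ub_inner[OF UF x b] ..
    ultimately show "tensor_vec a b \<in> {f \<in> T0. WE (contr x f) = contr (WF x) (H f)}"
      using tensor_in_htensor[OF a b] by simp
  qed
  then show ?thesis using f by blast
qed

lemma comm1:
  assumes y: "y \<in> E0" and f: "f \<in> T0"
  shows "WF (contr1 y f) = contr1 (WE y) (H f)"
proof -
  have yl: "y \<in> l2" using cs_l2[OF E0 y] .
  have Yl: "WE y \<in> l2" by (rule WE_l2[OF y])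
  have "T0 \<subseteq> {f \<in> T0. WF (contr1 y f) = contr1 (WE y) (H f)}"
  proof (rule htensor_sub)
    show "closed_subspace {f \<in> T0. WF (contr1 y f) = contr1 (WE y) (H f)}"
    proof (rule cs_eq[OF T0, where ?K1.0="nrm2 y" and ?K2.0="nrm2 y"])
      fix f assume f: "f \<in> T0"
      have fl: "f \<in> l2" using cs_l2[OF T0 f] .
      have cin: "contr1 y f \<in> F0" by (rule contr1_in[OF E0 F0 yl f])
      show "WF (contr1 y f) \<in> l2" by (rule WF_l2[OF cin])
      show "nrm2 (WF (contr1 y f)) \<le> nrm2 y * nrm2 f"
        using WF_nrm2[OF cin] contr1_bound(2)[OF yl fl] by simp
      show "contr1 (WE y) (H f) \<in> l2" by (rule contr1_bound(1)[OF Yl H_l2(1)[OF f]])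
      show "nrm2 (contr1 (WE y) (H f)) \<le> nrm2 y * nrm2 f"
        using contr1_bound(2)[OF Yl H_l2(1)[OF f]] WE_nrm2[OF y] H_l2(2)[OF f] by simp
      fix c
      show "WF (contr1 y (\<lambda>i. c * f i)) = (\<lambda>k. c * WF (contr1 y f) k)"
        unfolding contr1_scale by (rule ub_scale[OF UF cin])
      show "contr1 (WE y) (H (\<lambda>i. c * f i)) = (\<lambda>k. c * contr1 (WE y) (H f) k)"
        unfolding H_scale[OF f] by (rule contr1_scale)
    next
      fix f g assume f: "f \<in> T0" and g: "g \<in> T0"
      have fl: "f \<in> l2" using cs_l2[OF T0 f] .
      have gl: "g \<in> l2" using cs_l2[OF T0 g] .
      show "WF (contr1 y (\<lambda>i. f i + g i)) = (\<lambda>k. WF (contr1 y f) k + WF (contr1 y g) k)"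
        unfolding contr1_add[OF yl fl gl]
        by (rule ub_add[OF UF contr1_in[OF E0 F0 yl f] contr1_in[OF E0 F0 yl g]])
      show "contr1 (WE y) (H (\<lambda>i. f i + g i)) = (\<lambda>k. contr1 (WE y) (H f) k + contr1 (WE y) (H g) k)"
        unfolding H_add[OF f g] by (rule contr1_add[OF Yl H_l2(1)[OF f] H_l2(1)[OF g]])
    qed
    fix a b assume a: "a \<in> E0" and b: "b \<in> F0"
    have "WF (contr1 y (tensor_vec a b)) = (\<lambda>z. inner_l2 y a * WF b z)"
      unfolding contr1_tensor by (rule ub_scale[OF UF b])
    moreover have "contr1 (WE y) (H (tensor_vec a b)) = (\<lambda>z. inner_l2 y a * WF b z)"
      unfolding H_tensor[OF a b] contr1_tensor ub_inner[OF UE y a] ..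
    ultimately show "tensor_vec a b \<in> {f \<in> T0. WF (contr1 y f) = contr1 (WE y) (H f)}"
      using tensor_in_htensor[OF a b] by simp
  qed
  then show ?thesis using f by blast
qed

end

lemma inner_real_self: "f \<in> l2 \<Longrightarrow> nrm2 f = 1 \<Longrightarrow> inner_l2 f f = 1"
  by (simp add: inner_self)

lemma bessel:
  fixes p :: "'a \<Rightarrow> complex" and q :: "'b \<Rightarrow> complex" and X :: "'a \<times> 'b \<Rightarrow> complex"
  assumes p: "p \<in> l2" and q: "q \<in> l2" and np: "nrm2 p = 1" and nq: "nrm2 q = 1" and X: "X \<in> l2"
  shows "nrm2 (\<lambda>k. contr q X k - inner_l2 p (contr q X) * p k)
       + nrm2 (\<lambda>k. contr1 p X k - inner_l2 q (contr1 p X) * q k) \<le> nrm2 X"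
proof -
  define X1 where "X1 = contr q X"
  define X2 where "X2 = contr1 p X"
  define \<alpha> where "\<alpha> = inner_l2 p X1"
  define Y1 where "Y1 = (\<lambda>k. X1 k - \<alpha> * p k)"
  define Y2 where "Y2 = (\<lambda>k. X2 k - \<alpha> * q k)"
  have X1l: "X1 \<in> l2" unfolding X1_def by (rule contr_bound(1)[OF q X])
  have X2l: "X2 \<in> l2" unfolding X2_def by (rule contr1_bound(1)[OF p X])
  have a2: "inner_l2 q X2 = \<alpha>"
    unfolding X2_def \<alpha>_def X1_def using inner_contr1[OF p q X] inner_contr[OF p q X] by simp
  have pp: "inner_l2 p p = 1" by (rule inner_real_self[OF p np])
  have qq: "inner_l2 q q = 1" by (rule inner_real_self[OF q nq])
  have Y1l: "Y1 \<in> l2" unfolding Y1_def using l2_diff[OF X1l l2_scale[OF p]] .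
  have Y2l: "Y2 \<in> l2" unfolding Y2_def using l2_diff[OF X2l l2_scale[OF q]] .
  have pY1: "inner_l2 p Y1 = 0"
    unfolding Y1_def using inner_diff_right[OF p X1l l2_scale[OF p]] by (simp add: inner_scale_right pp \<alpha>_def)
  have qY2: "inner_l2 q Y2 = 0"
    unfolding Y2_def using inner_diff_right[OF q X2l l2_scale[OF q]] by (simp add: inner_scale_right qq a2)
  have Y1p: "inner_l2 Y1 p = 0" using pY1 inner_conj[of Y1 p] by simp
  have Y2q: "inner_l2 Y2 q = 0" using qY2 inner_conj[of Y2 q] by simp
  have X1e: "X1 = (\<lambda>k. Y1 k + \<alpha> * p k)" by (simp add: Y1_def)
  have X2e: "X2 = (\<lambda>k. Y2 k + \<alpha> * q k)" by (simp add: Y2_def)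
  have iY1X1: "inner_l2 Y1 X1 = complex_of_real (nrm2 Y1)"
    unfolding X1e using inner_add_right[OF Y1l Y1l l2_scale[OF p]] inner_self[OF Y1l]
    by (simp add: inner_scale_right Y1p)
  have iY2X2: "inner_l2 Y2 X2 = complex_of_real (nrm2 Y2)"
    unfolding X2e using inner_add_right[OF Y2l Y2l l2_scale[OF q]] inner_self[OF Y2l]
    by (simp add: inner_scale_right Y2q)
  define T1 where "T1 = tensor_vec Y1 q"
  define T2 where "T2 = (\<lambda>z. \<alpha> * tensor_vec p q z)"
  define T3 where "T3 = tensor_vec p Y2"
  have T1l: "T1 \<in> l2" unfolding T1_def by (rule l2_tensor[OF Y1l q])
  have T2l: "T2 \<in> l2" unfolding T2_def by (rule l2_scale[OF l2_tensor[OF p q]])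
  have T3l: "T3 \<in> l2" unfolding T3_def by (rule l2_tensor[OF p Y2l])
  have T23l: "(\<lambda>z. T2 z + T3 z) \<in> l2" by (rule l2_add[OF T2l T3l])
  define P where "P = (\<lambda>z. T1 z + (T2 z + T3 z))"
  have Pl: "P \<in> l2" unfolding P_def by (rule l2_add[OF T1l T23l])
  have i1: "inner_l2 T1 X = complex_of_real (nrm2 Y1)"
    unfolding T1_def using inner_contr[OF Y1l q X] iY1X1 X1_def by simp
  have i2: "inner_l2 T2 X = cnj \<alpha> * \<alpha>"
    unfolding T2_def using inner_contr[OF p q X] by (simp add: inner_scale_left \<alpha>_def X1_def)
  have i3: "inner_l2 T3 X = complex_of_real (nrm2 Y2)"
    unfolding T3_def using inner_contr1[OF p Y2l X] iY2X2 X2_def by simp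
  define \<sigma> where "\<sigma> = nrm2 Y1 + (cmod \<alpha>)^2 + nrm2 Y2"
  have cc: "cnj \<alpha> * \<alpha> = complex_of_real ((cmod \<alpha>)^2)"
    using complex_norm_square[of \<alpha>] by (simp add: mult.commute)
  have iPX: "inner_l2 P X = complex_of_real \<sigma>"
    unfolding P_def inner_add_left[OF T1l T23l X] inner_add_left[OF T2l T3l X] i1 i2 i3 \<sigma>_def cc
    by simp
  have n23: "nrm2 (\<lambda>z. T2 z + T3 z) = (cmod \<alpha>)^2 + nrm2 Y2"
  proof -
    have "inner_l2 T2 T3 = cnj \<alpha> * (inner_l2 p p * inner_l2 q Y2)"
      unfolding T2_def T3_def by (simp add: inner_scale_left inner_tensor[OF p q p Y2l])
    then have "inner_l2 T2 T3 = 0" by (simp add: qY2)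
    moreover have "nrm2 T2 = (cmod \<alpha>)^2" unfolding T2_def
      by (simp add: nrm2_scale nrm2_tensor[OF p q] np nq)
    moreover have "nrm2 T3 = nrm2 Y2" unfolding T3_def by (simp add: nrm2_tensor[OF p Y2l] np)
    ultimately show ?thesis using nrm2_add[OF T2l T3l] by simp
  qed
  have nP: "nrm2 P = \<sigma>"
  proof -
    have "inner_l2 T1 T2 = \<alpha> * (inner_l2 Y1 p * inner_l2 q q)"
      unfolding T1_def T2_def by (simp add: inner_scale_right inner_tensor[OF Y1l q p q])
    then have a: "inner_l2 T1 T2 = 0" by (simp add: Y1p)
    have "inner_l2 T1 T3 = inner_l2 Y1 p * inner_l2 q Y2"
      unfolding T1_def T3_def by (rule inner_tensor[OF Y1l q p Y2l])
    then have b: "inner_l2 T1 T3 = 0" by (simp add: Y1p)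
    have c: "inner_l2 T1 (\<lambda>z. T2 z + T3 z) = 0"
      using inner_add_right[OF T1l T2l T3l] a b by simp
    have "nrm2 T1 = nrm2 Y1" unfolding T1_def by (simp add: nrm2_tensor[OF Y1l q] nq)
    then show ?thesis unfolding P_def using nrm2_add[OF T1l T23l] c n23 \<sigma>_def by simp
  qed
  have "0 \<le> nrm2 (\<lambda>z. X z + - P z)" by (rule nrm2_nonneg)
  also have "\<dots> = nrm2 X + nrm2 (\<lambda>z. - P z) + 2 * Re (inner_l2 X (\<lambda>z. - P z))"
    by (rule nrm2_add[OF X l2_minus[OF Pl]])
  also have "nrm2 (\<lambda>z. - P z) = nrm2 P" by (simp add: nrm2_def)
  also have "inner_l2 X (\<lambda>z. - P z) = - cnj (inner_l2 P X)"
    by (simp add: inner_minus_right inner_conj[of X P])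
  finally have "\<sigma> \<le> nrm2 X" using nP iPX by simp
  moreover have "(cmod \<alpha>)^2 \<ge> 0" by simp
  ultimately have fin: "nrm2 Y1 + nrm2 Y2 \<le> nrm2 X" unfolding \<sigma>_def by linarith
  have e: "inner_l2 q (contr1 p X) = inner_l2 p (contr q X)" using a2 X2_def \<alpha>_def X1_def by simp
  show ?thesis unfolding e using fin unfolding Y1_def Y2_def X1_def X2_def \<alpha>_def .
qed

lemma meas_cnj: "f \<in> borel_measurable M \<Longrightarrow> (\<lambda>t. cnj (f t)) \<in> borel_measurable M"
  for f :: "_ \<Rightarrow> complex"
  by (rule borel_measurable_continuous_on[of cnj]) (auto intro: continuous_on_cnj continuous_on_id)

lemma meas_infsum:
  fixes F :: "'t \<Rightarrow> 'k::countable \<Rightarrow> complex"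
  assumes m: "\<And>k. (\<lambda>t. F t k) \<in> borel_measurable M"
    and s: "\<And>t. t \<in> space M \<Longrightarrow> F t summable_on UNIV"
  shows "(\<lambda>t. infsum (F t) UNIV) \<in> borel_measurable M"
proof (rule borel_measurable_LIMSEQ_metric[where f="\<lambda>n t. sum (F t) {k. to_nat k < n}"])
  fix n
  have fin: "finite {k::'k. to_nat k < n}"
    using finite_vimageI[of "{..<n}" "to_nat :: 'k \<Rightarrow> nat"] by (simp add: vimage_def)
  show "(\<lambda>t. sum (F t) {k. to_nat k < n}) \<in> borel_measurable M"
    using fin by (induction rule: finite_induct) (auto intro!: borel_measurable_add m)
next
  fix t assume t: "t \<in> space M"
  have h: "(sum (F t) \<longlongrightarrow> infsum (F t) UNIV) (finite_subsets_at_top UNIV)"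
    using has_sum_infsum[OF s[OF t]] unfolding has_sum_def .
  have fl: "filterlim (\<lambda>n. {k::'k. to_nat k < n}) (finite_subsets_at_top UNIV) sequentially"
    unfolding filterlim_finite_subsets_at_top
  proof (intro allI impI)
    fix X :: "'k set" assume X: "finite X \<and> X \<subseteq> UNIV"
    have fin: "finite {k::'k. to_nat k < n}" for n
      using finite_vimageI[of "{..<n}" "to_nat :: 'k \<Rightarrow> nat"] by (simp add: vimage_def)
    obtain N where N: "\<And>x. x \<in> X \<Longrightarrow> to_nat x < N"
      using X finite_nat_bounded[of "to_nat ` X"] by (auto simp: lessThan_def)
    show "\<forall>\<^sub>F n in sequentially. finite {k::'k. to_nat k < n} \<and> X \<subseteq> {k. to_nat k < n} \<and> {k. to_nat k < n} \<subseteq> UNIV"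
      using eventually_ge_at_top[of N]
    proof eventually_elim
      case (elim n)
      have "X \<subseteq> {k. to_nat k < n}" using N elim by fastforce
      then show ?case using fin[of n] by simp
    qed
  qed
  show "(\<lambda>n. sum (F t) {k. to_nat k < n}) \<longlonglongrightarrow> infsum (F t) UNIV"
    using tendsto_compose_filtermap[of "sum (F t)"] filterlim_compose[OF h fl] by (simp add: o_def)
qed

lemma meas_coord:
  assumes "meas_section a"
  shows "(\<lambda>t. a t i) \<in> borel_measurable (restrict_space borel {0<..})"
proof -
  have "(\<lambda>t. inner_l2 (delta i) (a t)) \<in> borel_measurable (restrict_space borel {0<..})"
    using assms delta_l2[of i] unfolding meas_section_def by blast
  then show ?thesis by (simp add: inner_delta)
qed

lemma inner_X_tensor1:
  assumes X: "X \<in> l2" and p: "p \<in> l2" and q: "q \<in> l2"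
  shows "inner_l2 X (tensor_vec p q) = inner_l2 (contr q X) p"
  using inner_contr[OF p q X] inner_conj[of X "tensor_vec p q"] inner_conj[of "contr q X" p] by simp

lemma inner_X_tensor2:
  assumes X: "X \<in> l2" and p: "p \<in> l2" and q: "q \<in> l2"
  shows "inner_l2 X (tensor_vec p q) = inner_l2 (contr1 p X) q"
  using inner_contr1[OF p q X] inner_conj[of X "tensor_vec p q"] inner_conj[of "contr1 p X" q] by simp

lemma rowG:
  fixes ds dt :: "'i \<times> 'j \<Rightarrow> complex" and us ut :: "'i \<Rightarrow> complex"
    and vs vt :: "'j \<Rightarrow> complex" and X :: "'j \<times> 'j \<Rightarrow> complex"
  assumes ds: "ds \<in> l2" and dt: "dt \<in> l2" and us: "us \<in> l2" and ut: "ut \<in> l2"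
    and vs: "vs \<in> l2" and vt: "vt \<in> l2" and X: "X \<in> l2"
  shows "contr X (\<lambda>((i1,i2),(k1,k2)). ds (i1,k1) * ut i2 * vt k2 + us i1 * vs k1 * dt (i2,k2))
       = (\<lambda>(i1,i2). ut i2 * contr (contr vt X) ds i1 + us i1 * contr (contr1 vs X) dt i2)"
proof (rule ext, clarify)
  fix i1 i2
  let ?r = "\<lambda>j. ds (i1,j)" and ?r' = "\<lambda>j. dt (i2,j)"
  have rl: "?r \<in> l2" "?r' \<in> l2" using row_l2[OF ds] row_l2[OF dt] by auto
  have e: "(\<lambda>j. (\<lambda>((i1,i2),(k1,k2)). ds (i1,k1) * ut i2 * vt k2 + us i1 * vs k1 * dt (i2,k2)) ((i1,i2),j))
     = (\<lambda>k. ut i2 * tensor_vec ?r vt k + us i1 * tensor_vec vs ?r' k)"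
    by (auto simp: tensor_vec_def algebra_simps)
  have t1: "tensor_vec ?r vt \<in> l2" "tensor_vec vs ?r' \<in> l2"
    using l2_tensor rl vt vs by blast+
  have "contr X (\<lambda>((i1,i2),(k1,k2)). ds (i1,k1) * ut i2 * vt k2 + us i1 * vs k1 * dt (i2,k2)) (i1,i2)
      = inner_l2 X (\<lambda>k. ut i2 * tensor_vec ?r vt k + us i1 * tensor_vec vs ?r' k)"
    unfolding contr_def e ..
  also have "\<dots> = ut i2 * inner_l2 X (tensor_vec ?r vt) + us i1 * inner_l2 X (tensor_vec vs ?r')"
    using inner_add_right[OF X l2_scale[OF t1(1)] l2_scale[OF t1(2)]] by (simp add: inner_scale_right)
  also have "\<dots> = ut i2 * contr (contr vt X) ds i1 + us i1 * contr (contr1 vs X) dt i2"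
    unfolding inner_X_tensor1[OF X rl(1) vt] inner_X_tensor2[OF X vs rl(2)] contr_def ..
  finally show "contr X (\<lambda>((i1,i2),(k1,k2)). ds (i1,k1) * ut i2 * vt k2 + us i1 * vs k1 * dt (i2,k2)) (i1,i2)
      = ut i2 * contr (contr vt X) ds i1 + us i1 * contr (contr1 vs X) dt i2" .
qed

lemma colG:
  fixes ds dt :: "'i \<times> 'j \<Rightarrow> complex" and us ut :: "'i \<Rightarrow> complex"
    and vs vt :: "'j \<Rightarrow> complex" and Y :: "'i \<times> 'i \<Rightarrow> complex"
  assumes ds: "ds \<in> l2" and dt: "dt \<in> l2" and us: "us \<in> l2" and ut: "ut \<in> l2"
    and vs: "vs \<in> l2" and vt: "vt \<in> l2" and Y: "Y \<in> l2"
  shows "contr1 Y (\<lambda>((i1,i2),(k1,k2)). ds (i1,k1) * ut i2 * vt k2 + us i1 * vs k1 * dt (i2,k2))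
       = (\<lambda>(k1,k2). vt k2 * contr1 (contr ut Y) ds k1 + vs k1 * contr1 (contr1 us Y) dt k2)"
proof (rule ext, clarify)
  fix k1 k2
  let ?r = "\<lambda>i. ds (i,k1)" and ?r' = "\<lambda>i. dt (i,k2)"
  have rl: "?r \<in> l2" "?r' \<in> l2" using col_l2[OF ds] col_l2[OF dt] by auto
  have e: "(\<lambda>i. (\<lambda>((i1,i2),(k1,k2)). ds (i1,k1) * ut i2 * vt k2 + us i1 * vs k1 * dt (i2,k2)) (i,(k1,k2)))
     = (\<lambda>k. vt k2 * tensor_vec ?r ut k + vs k1 * tensor_vec us ?r' k)"
    by (auto simp: tensor_vec_def algebra_simps)
  have t1: "tensor_vec ?r ut \<in> l2" "tensor_vec us ?r' \<in> l2"
    using l2_tensor rl ut us by blast+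
  have "contr1 Y (\<lambda>((i1,i2),(k1,k2)). ds (i1,k1) * ut i2 * vt k2 + us i1 * vs k1 * dt (i2,k2)) (k1,k2)
      = inner_l2 Y (\<lambda>k. vt k2 * tensor_vec ?r ut k + vs k1 * tensor_vec us ?r' k)"
    unfolding contr1_def e ..
  also have "\<dots> = vt k2 * inner_l2 Y (tensor_vec ?r ut) + vs k1 * inner_l2 Y (tensor_vec us ?r')"
    using inner_add_right[OF Y l2_scale[OF t1(1)] l2_scale[OF t1(2)]] by (simp add: inner_scale_right)
  also have "\<dots> = vt k2 * contr1 (contr ut Y) ds k1 + vs k1 * contr1 (contr1 us Y) dt k2"
    unfolding inner_X_tensor1[OF Y rl(1) ut] inner_X_tensor2[OF Y us rl(2)] contr1_def ..
  finally show "contr1 Y (\<lambda>((i1,i2),(k1,k2)). ds (i1,k1) * ut i2 * vt k2 + us i1 * vs k1 * dt (i2,k2)) (k1,k2)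
      = vt k2 * contr1 (contr ut Y) ds k1 + vs k1 * contr1 (contr1 us Y) dt k2" .
qed

lemma shuffle_form:
  assumes "shuffle g = (\<lambda>p. tensor_vec ds (tensor_vec ut vt) p + tensor_vec (tensor_vec us vs) dt p)"
  shows "g = (\<lambda>((i1,i2),(k1,k2)). ds (i1,k1) * ut i2 * vt k2 + us i1 * vs k1 * dt (i2,k2))"
proof (rule ext, clarify)
  fix i1 i2 k1 k2
  have "shuffle g ((i1,k1),(i2,k2)) = g ((i1,i2),(k1,k2))" by (simp add: shuffle_def)
  then show "g ((i1,i2),(k1,k2)) = ds (i1,k1) * ut i2 * vt k2 + us i1 * vs k1 * dt (i2,k2)"
    using fun_cong[OF assms, of "((i1,k1),(i2,k2))"] by (simp add: tensor_vec_def algebra_simps)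
qed

lemma shuffle_bij: "bij_betw (\<lambda>((a,b),(c,d)). ((a,c),(b,d))) UNIV UNIV"
  by (rule bij_betwI[of _ _ _ "\<lambda>((a,c),(b,d)). ((a,b),(c,d))"]) auto

lemma nrm2_shuffle: "nrm2 (shuffle g) = nrm2 g"
proof -
  have "infsum (\<lambda>p. (\<lambda>q. (cmod (g q))^2) ((\<lambda>((a,b),(c,d)). ((a,c),(b,d))) p)) UNIV
        = infsum (\<lambda>q. (cmod (g q))^2) UNIV"
    by (rule infsum_reindex_bij_betw[OF shuffle_bij])
  moreover have "(\<lambda>p. (\<lambda>q. (cmod (g q))^2) ((\<lambda>((a,b),(c,d)). ((a,c),(b,d))) p)) = (\<lambda>p. (cmod (shuffle g p))^2)"
    by (auto simp: shuffle_def)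
  ultimately show ?thesis by (simp add: nrm2_def)
qed

lemma bound_zero:
  fixes v K :: real
  assumes "K \<ge> 0" "\<And>n. v \<le> K / 2^n"
  shows "v \<le> 0"
proof (rule ccontr)
  assume "\<not> v \<le> 0"
  then have v: "v > 0" by simp
  obtain n where n: "K / v < 2^n" using real_arch_pow[of 2 "K / v"] by auto
  then have "K < v * 2^n" using v by (simp add: field_simps)
  then have "K / 2^n < v" by (simp add: field_simps)
  then show False using assms(2)[of n] by simp
qed

locale twosys =
  fixes E :: "real \<Rightarrow> ('i::countable \<Rightarrow> complex) set"
    and WE :: "real \<Rightarrow> real \<Rightarrow> ('i \<Rightarrow> complex) \<Rightarrow> ('i \<times> 'i \<Rightarrow> complex)"
    and F :: "real \<Rightarrow> ('j::countable \<Rightarrow> complex) set"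
    and WF :: "real \<Rightarrow> real \<Rightarrow> ('j \<Rightarrow> complex) \<Rightarrow> ('j \<times> 'j \<Rightarrow> complex)"
    and u :: "real \<Rightarrow> ('i \<Rightarrow> complex)"
    and v :: "real \<Rightarrow> ('j \<Rightarrow> complex)"
  assumes PE: "product_system E WE" and PF: "product_system F WF"
    and NU: "normalized_unit E WE u" and NV: "normalized_unit F WF v"
begin

lemma Et: "t > 0 \<Longrightarrow> closed_subspace (E t)"
  using PE unfolding product_system_def by blast
lemma Ft: "t > 0 \<Longrightarrow> closed_subspace (F t)"
  using PF unfolding product_system_def by blast
lemma UE: "s > 0 \<Longrightarrow> t > 0 \<Longrightarrow> unitary_between (E (s+t)) (htensor (E s) (E t)) (WE s t)"
  using PE unfolding product_system_def by blast
lemma UF: "s > 0 \<Longrightarrow> t > 0 \<Longrightarrow> unitary_between (F (s+t)) (htensor (F s) (F t)) (WF s t)"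
  using PF unfolding product_system_def by blast

lemma hs: assumes "s > 0" "t > 0"
  shows "hsetup (E (s+t)) (F (s+t)) (htensor (E s) (E t)) (htensor (F s) (F t)) (WE s t) (WF s t)"
proof
  show "closed_subspace (E (s+t))" using Et assms by simp
  show "closed_subspace (F (s+t))" using Ft assms by simp
  show "closed_subspace (htensor (E s) (E t))"
    by (rule htensor_cs) (use cs_l2[OF Et] cs_l2[OF Et] assms in blast)+
  show "closed_subspace (htensor (F s) (F t))"
    by (rule htensor_cs) (use cs_l2[OF Ft] cs_l2[OF Ft] assms in blast)+
  show "unitary_between (E (s+t)) (htensor (E s) (E t)) (WE s t)" by (rule UE[OF assms])
  show "unitary_between (F (s+t)) (htensor (F s) (F t)) (WF s t)" by (rule UF[OF assms])
qed

lemma tW: assumes "s > 0" "t > 0"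
  shows "tensor_W WE WF s t f = shuffle (hsetup.H (WE s t) (WF s t) f)"
proof -
  interpret h: hsetup "E (s+t)" "F (s+t)" "htensor (E s) (E t)" "htensor (F s) (F t)" "WE s t" "WF s t"
    by (rule hs[OF assms])
  show ?thesis by (simp add: tensor_W_def h.H_def h.RT_def)
qed

lemma u_in: "t > 0 \<Longrightarrow> u t \<in> E t" using NU unfolding normalized_unit_def is_unit_def by blast
lemma v_in: "t > 0 \<Longrightarrow> v t \<in> F t" using NV unfolding normalized_unit_def is_unit_def by blast
lemma u_l2: "t > 0 \<Longrightarrow> u t \<in> l2" using u_in cs_l2[OF Et] by blast
lemma v_l2: "t > 0 \<Longrightarrow> v t \<in> l2" using v_in cs_l2[OF Ft] by blast
lemma u_meas: "meas_section u" using NU unfolding normalized_unit_def is_unit_def by blast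
lemma v_meas: "meas_section v" using NV unfolding normalized_unit_def is_unit_def by blast
lemma u_mult: "s > 0 \<Longrightarrow> t > 0 \<Longrightarrow> WE s t (u (s+t)) = tensor_vec (u s) (u t)"
  using NU unfolding normalized_unit_def is_unit_def by blast
lemma v_mult: "s > 0 \<Longrightarrow> t > 0 \<Longrightarrow> WF s t (v (s+t)) = tensor_vec (v s) (v t)"
  using NV unfolding normalized_unit_def is_unit_def by blast
lemma u_n: "t > 0 \<Longrightarrow> nrm2 (u t) = 1"
  using NU unfolding normalized_unit_def by (simp add: norm_l2_nrm2)
lemma v_n: "t > 0 \<Longrightarrow> nrm2 (v t) = 1"
  using NV unfolding normalized_unit_def by (simp add: norm_l2_nrm2)
lemma uu: "t > 0 \<Longrightarrow> inner_l2 (u t) (u t) = 1" using inner_self[OF u_l2] u_n by simp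
lemma vv: "t > 0 \<Longrightarrow> inner_l2 (v t) (v t) = 1" using inner_self[OF v_l2] v_n by simp

end

context twosys begin

lemma space_R: "t \<in> space (restrict_space borel {0<..}) \<longleftrightarrow> t > (0::real)"
  by (simp add: space_restrict_space)

lemma backward:
  assumes a: "a \<in> roots E WE u" and b: "b \<in> roots F WF v"
    and c: "\<forall>t>0. c t = (\<lambda>p. tensor_vec (a t) (v t) p + tensor_vec (u t) (b t) p)"
  shows "c \<in> roots (tensor_spaces E F) (tensor_W WE WF) (tensor_section u v)"
proof -
  have am: "meas_section a" and ain: "\<And>t. t > 0 \<Longrightarrow> a t \<in> E t"
    and aadd: "\<And>s t. s > 0 \<Longrightarrow> t > 0 \<Longrightarrow> WE s t (a (s+t)) = (\<lambda>p. tensor_vec (a s) (u t) p + tensor_vec (u s) (a t) p)"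
    and aorth: "\<And>t. t > 0 \<Longrightarrow> inner_l2 (a t) (u t) = 0"
    using a unfolding roots_def additive_unit_def by blast+
  have bm: "meas_section b" and bin: "\<And>t. t > 0 \<Longrightarrow> b t \<in> F t"
    and badd: "\<And>s t. s > 0 \<Longrightarrow> t > 0 \<Longrightarrow> WF s t (b (s+t)) = (\<lambda>p. tensor_vec (b s) (v t) p + tensor_vec (v s) (b t) p)"
    and borth: "\<And>t. t > 0 \<Longrightarrow> inner_l2 (b t) (v t) = 0"
    using b unfolding roots_def additive_unit_def by blast+
  have al: "t > 0 \<Longrightarrow> a t \<in> l2" for t using ain cs_l2[OF Et] by blast
  have bl: "t > 0 \<Longrightarrow> b t \<in> l2" for t using bin cs_l2[OF Ft] by blast
  have cin: "c t \<in> htensor (E t) (F t)" if t: "t > 0" for t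
  proof -
    have "closed_subspace (htensor (E t) (F t))"
      by (rule htensor_cs) (use cs_l2[OF Et] cs_l2[OF Ft] t in blast)+
    then show ?thesis using c t cs_add tensor_in_htensor ain bin u_in v_in by metis
  qed
  have cl: "t > 0 \<Longrightarrow> c t \<in> l2" for t
    using c l2_add l2_tensor al bl u_l2 v_l2 by metis
  have meas: "meas_section c"
    unfolding meas_section_def
  proof
    fix x :: "'i \<times> 'j \<Rightarrow> complex" assume x: "x \<in> l2"
    define c' where "c' = (\<lambda>t p. a t (fst p) * v t (snd p) + u t (fst p) * b t (snd p))"
    have cc': "t > 0 \<Longrightarrow> c t = c' t" for t using c by (auto simp: c'_def tensor_vec_def case_prod_unfold)
    have "(\<lambda>t. infsum (\<lambda>p. cnj (x p) * c' t p) UNIV) \<in> borel_measurable (restrict_space borel {0<..})"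
    proof (rule meas_infsum)
      fix p :: "'i \<times> 'j"
      show "(\<lambda>t. cnj (x p) * c' t p) \<in> borel_measurable (restrict_space borel {0<..})"
        unfolding c'_def
        by (intro borel_measurable_times borel_measurable_add borel_measurable_const
            meas_coord[OF am] meas_coord[OF bm] meas_coord[OF u_meas] meas_coord[OF v_meas])
    next
      fix t :: real assume "t \<in> space (restrict_space borel {0<..})"
      then have t: "t > 0" by (simp add: space_restrict_space)
      show "(\<lambda>p. cnj (x p) * c' t p) summable_on UNIV"
        using summable_inner[OF x cl[OF t]] cc'[OF t] by simp
    qed
    then have "(\<lambda>t. inner_l2 x (c' t)) \<in> borel_measurable (restrict_space borel {0<..})"
      by (simp add: inner_l2_def)
    then show "(\<lambda>t. inner_l2 x (c t)) \<in> borel_measurable (restrict_space borel {0<..})"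
      by (subst measurable_cong[where g="\<lambda>t. inner_l2 x (c' t)"]) (auto simp: space_restrict_space cc')
  qed
  have add: "tensor_W WE WF s t (c (s + t)) =
      (\<lambda>p. tensor_vec (c s) (tensor_section u v t) p + tensor_vec (tensor_section u v s) (c t) p)"
    if s: "s > 0" and t: "t > 0" for s t
  proof -
    interpret h: hsetup "E (s+t)" "F (s+t)" "htensor (E s) (E t)" "htensor (F s) (F t)" "WE s t" "WF s t"
      by (rule hs[OF s t])
    have st: "s + t > 0" using s t by simp
    have A: "tensor_vec (a (s+t)) (v (s+t)) \<in> h.T0" by (rule tensor_in_htensor[OF ain[OF st] v_in[OF st]])
    have B: "tensor_vec (u (s+t)) (b (s+t)) \<in> h.T0" by (rule tensor_in_htensor[OF u_in[OF st] bin[OF st]])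
    have "tensor_W WE WF s t (c (s + t)) = shuffle (h.H (\<lambda>p. tensor_vec (a (s+t)) (v (s+t)) p + tensor_vec (u (s+t)) (b (s+t)) p))"
      using tW[OF s t] c st by simp
    also have "\<dots> = shuffle (\<lambda>q. tensor_vec (WE s t (a (s+t))) (WF s t (v (s+t))) q + tensor_vec (WE s t (u (s+t))) (WF s t (b (s+t))) q)"
      unfolding h.H_add[OF A B] h.H_tensor[OF ain[OF st] v_in[OF st]] h.H_tensor[OF u_in[OF st] bin[OF st]] ..
    also have "\<dots> = (\<lambda>p. tensor_vec (c s) (tensor_section u v t) p + tensor_vec (tensor_section u v s) (c t) p)"
      unfolding aadd[OF s t] badd[OF s t] u_mult[OF s t] v_mult[OF s t] c[rule_format, OF s] c[rule_format, OF t]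
      by (auto simp: fun_eq_iff shuffle_def tensor_vec_def tensor_section_def algebra_simps)
    finally show ?thesis .
  qed
  have orth: "inner_l2 (c t) (tensor_section u v t) = 0" if t: "t > 0" for t
  proof -
    have "inner_l2 (c t) (tensor_section u v t)
        = inner_l2 (tensor_vec (a t) (v t)) (tensor_vec (u t) (v t)) + inner_l2 (tensor_vec (u t) (b t)) (tensor_vec (u t) (v t))"
      unfolding c[rule_format, OF t] tensor_section_def
      by (rule inner_add_left[OF l2_tensor[OF al[OF t] v_l2[OF t]] l2_tensor[OF u_l2[OF t] bl[OF t]] l2_tensor[OF u_l2[OF t] v_l2[OF t]]])
    also have "\<dots> = 0"
      using inner_tensor[OF al[OF t] v_l2[OF t] u_l2[OF t] v_l2[OF t]] inner_tensor[OF u_l2[OF t] bl[OF t] u_l2[OF t] v_l2[OF t]]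
        aorth[OF t] borth[OF t] by simp
    finally show ?thesis .
  qed
  show ?thesis
    unfolding roots_def additive_unit_def tensor_spaces_def
    using meas cin add orth by blast
qed

end

context twosys begin

lemma dzero:
  fixes d :: "real \<Rightarrow> ('i \<times> 'j \<Rightarrow> complex)"
  assumes din: "\<And>t. t > 0 \<Longrightarrow> d t \<in> htensor (E t) (F t)"
    and dv: "\<And>t. t > 0 \<Longrightarrow> contr (v t) (d t) = (\<lambda>_. 0)"
    and du: "\<And>t. t > 0 \<Longrightarrow> contr1 (u t) (d t) = (\<lambda>_. 0)"
    and dw: "\<And>t. t > 0 \<Longrightarrow> inner_l2 (d t) (tensor_vec (u t) (v t)) = 0"
    and dadd: "\<And>s t. s > 0 \<Longrightarrow> t > 0 \<Longrightarrow> tensor_W WE WF s t (d (s+t)) =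
        (\<lambda>p. tensor_vec (d s) (tensor_vec (u t) (v t)) p + tensor_vec (tensor_vec (u s) (v s)) (d t) p)"
    and t0: "t > 0"
  shows "d t = (\<lambda>_. 0)"
proof -
  have dl: "r > 0 \<Longrightarrow> d r \<in> l2" for r
  proof -
    assume r: "r > 0"
    have "closed_subspace (htensor (E r) (F r))"
      by (rule htensor_cs) (use cs_l2[OF Et] cs_l2[OF Ft] r in blast)+
    then show ?thesis using cs_l2 din[OF r] by blast
  qed
  have wl: "r > 0 \<Longrightarrow> tensor_vec (u r) (v r) \<in> l2" for r using l2_tensor u_l2 v_l2 by blast
  have wn: "nrm2 (tensor_vec (u r) (v r)) = 1" if r: "r > 0" for r
    using nrm2_tensor[OF u_l2[OF r] v_l2[OF r]] u_n[OF r] v_n[OF r] by simp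
  have Hform: "hsetup.H (WE s t) (WF s t) (d (s+t)) =
      (\<lambda>((i1,i2),(k1,k2)). d s (i1,k1) * u t i2 * v t k2 + u s i1 * v s k1 * d t (i2,k2))"
    if s: "s > 0" and t: "t > 0" for s t
    by (rule shuffle_form) (use dadd[OF s t] tW[OF s t] in simp)
  have K1: "nrm2 (d (s+t)) = nrm2 (d s) + nrm2 (d t)" if s: "s > 0" and t: "t > 0" for s t
  proof -
    interpret h: hsetup "E (s+t)" "F (s+t)" "htensor (E s) (E t)" "htensor (F s) (F t)" "WE s t" "WF s t"
      by (rule hs[OF s t])
    have st: "s + t > 0" using s t by simp
    have T1: "tensor_vec (d s) (tensor_vec (u t) (v t)) \<in> l2" by (rule l2_tensor[OF dl[OF s] wl[OF t]])
    have T2: "tensor_vec (tensor_vec (u s) (v s)) (d t) \<in> l2" by (rule l2_tensor[OF wl[OF s] dl[OF t]])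
    have "nrm2 (d (s+t)) = nrm2 (h.H (d (s+t)))" using h.H_l2(2)[OF din[OF st]] by simp
    also have "\<dots> = nrm2 (tensor_W WE WF s t (d (s+t)))" by (simp only: tW[OF s t] nrm2_shuffle)
    also have "\<dots> = nrm2 (d s) + nrm2 (d t)"
    proof -
      have "inner_l2 (tensor_vec (d s) (tensor_vec (u t) (v t))) (tensor_vec (tensor_vec (u s) (v s)) (d t))
          = inner_l2 (d s) (tensor_vec (u s) (v s)) * inner_l2 (tensor_vec (u t) (v t)) (d t)"
        by (rule inner_tensor[OF dl[OF s] wl[OF t] wl[OF s] dl[OF t]])
      then have "inner_l2 (tensor_vec (d s) (tensor_vec (u t) (v t))) (tensor_vec (tensor_vec (u s) (v s)) (d t)) = 0"
        using dw[OF s] by simp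
      then show ?thesis unfolding dadd[OF s t] nrm2_add[OF T1 T2]
        by (simp add: nrm2_tensor[OF dl[OF s] wl[OF t]] nrm2_tensor[OF wl[OF s] dl[OF t]] wn s t)
    qed
    finally show ?thesis .
  qed
  have K2: "nrm2 (d r) = 2^n * nrm2 (d (r / 2^n))" if r: "r > 0" for r n
  proof (induction n)
    case 0 then show ?case by simp
  next
    case (Suc n)
    define q where "q = r / 2^(Suc n)"
    have p: "q > 0" using r by (simp add: q_def)
    have e: "r / 2^n = q + q" unfolding q_def by (simp add: power_Suc divide_simps)
    have "nrm2 (d (r / 2^n)) = 2 * nrm2 (d q)"
      using K1[OF p p] unfolding e by simp
    then have "nrm2 (d r) = 2^n * (2 * nrm2 (d q))" using Suc.IH by simp
    then show ?case unfolding q_def by (simp add: power_Suc)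
  qed
  define Pb where "Pb = (\<lambda>r C. \<forall>x\<in>F r. nrm2 (contr x (d r)) \<le> C * nrm2 x)"
  have K3: "Pb (s+t) C" if s: "s > 0" and t: "t > 0" and C: "C \<ge> 0" and Ps: "Pb s C" and Pt: "Pb t C" for s t C
    unfolding Pb_def
  proof
    fix x assume x: "x \<in> F (s+t)"
    interpret h: hsetup "E (s+t)" "F (s+t)" "htensor (E s) (E t)" "htensor (F s) (F t)" "WE s t" "WF s t"
      by (rule hs[OF s t])
    have st: "s + t > 0" using s t by simp
    have xl: "x \<in> l2" using cs_l2[OF Ft[OF st] x] .
    define X where "X = WF s t x"
    have XT: "X \<in> htensor (F s) (F t)" unfolding X_def by (rule ub_in[OF UF[OF s t] x])
    have Xl: "X \<in> l2" unfolding X_def by (rule h.WF_l2[OF x])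
    have nX: "nrm2 X = nrm2 x" unfolding X_def by (rule h.WF_nrm2[OF x])
    define X1 where "X1 = contr (v t) X"
    define X2 where "X2 = contr1 (v s) X"
    define Y1 where "Y1 = (\<lambda>k. X1 k - inner_l2 (v s) X1 * v s k)"
    define Y2 where "Y2 = (\<lambda>k. X2 k - inner_l2 (v t) X2 * v t k)"
    have X1F: "X1 \<in> F s" unfolding X1_def by (rule contr_in[OF Ft[OF s] Ft[OF t] v_l2[OF t] XT])
    have X2F: "X2 \<in> F t" unfolding X2_def by (rule contr1_in[OF Ft[OF s] Ft[OF t] v_l2[OF s] XT])
    have Y1F: "Y1 \<in> F s" unfolding Y1_def by (rule cs_diff[OF Ft[OF s] X1F cs_scale[OF Ft[OF s] v_in[OF s]]])
    have Y2F: "Y2 \<in> F t" unfolding Y2_def by (rule cs_diff[OF Ft[OF t] X2F cs_scale[OF Ft[OF t] v_in[OF t]]])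
    have X1l: "X1 \<in> l2" using cs_l2[OF Ft[OF s] X1F] .
    have X2l: "X2 \<in> l2" using cs_l2[OF Ft[OF t] X2F] .
    have Y1l: "Y1 \<in> l2" using cs_l2[OF Ft[OF s] Y1F] .
    have Y2l: "Y2 \<in> l2" using cs_l2[OF Ft[OF t] Y2F] .
    define A where "A = contr Y1 (d s)"
    define B where "B = contr Y2 (d t)"
    have A: "A = contr X1 (d s)"
    proof -
      have "contr Y1 (d s) = contr (\<lambda>k. X1 k + (- inner_l2 (v s) X1) * v s k) (d s)"
        unfolding Y1_def by simp
      also have "\<dots> = (\<lambda>i. contr X1 (d s) i + contr (\<lambda>k. (- inner_l2 (v s) X1) * v s k) (d s) i)"
        by (rule contr_addx[OF X1l l2_scale[OF v_l2[OF s]] dl[OF s]])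
      also have "\<dots> = contr X1 (d s)" unfolding contr_scalex dv[OF s] by simp
      finally show ?thesis unfolding A_def .
    qed
    have B: "B = contr X2 (d t)"
    proof -
      have "contr Y2 (d t) = contr (\<lambda>k. X2 k + (- inner_l2 (v t) X2) * v t k) (d t)"
        unfolding Y2_def by simp
      also have "\<dots> = (\<lambda>i. contr X2 (d t) i + contr (\<lambda>k. (- inner_l2 (v t) X2) * v t k) (d t) i)"
        by (rule contr_addx[OF X2l l2_scale[OF v_l2[OF t]] dl[OF t]])
      also have "\<dots> = contr X2 (d t)" unfolding contr_scalex dv[OF t] by simp
      finally show ?thesis unfolding B_def .
    qed
    have Al: "A \<in> l2" unfolding A_def by (rule contr_bound(1)[OF Y1l dl[OF s]])
    have Bl: "B \<in> l2" unfolding B_def by (rule contr_bound(1)[OF Y2l dl[OF t]])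
    have cx: "contr x (d (s+t)) \<in> E (s+t)" by (rule contr_in[OF Et[OF st] Ft[OF st] xl din[OF st]])
    have "nrm2 (contr x (d (s+t))) = nrm2 (WE s t (contr x (d (s+t))))"
      using h.WE_nrm2[OF cx] by simp
    also have "\<dots> = nrm2 (contr X (h.H (d (s+t))))"
      unfolding X_def h.comm[OF x din[OF st]] ..
    also have "contr X (h.H (d (s+t))) = (\<lambda>(i1,i2). u t i2 * contr X1 (d s) i1 + u s i1 * contr X2 (d t) i2)"
      unfolding Hform[OF s t] X1_def X2_def
      by (rule rowG[OF dl[OF s] dl[OF t] u_l2[OF s] u_l2[OF t] v_l2[OF s] v_l2[OF t] Xl])
    also have "\<dots> = (\<lambda>p. tensor_vec A (u t) p + tensor_vec (u s) B p)"
      unfolding A B by (rule ext, clarify) (simp add: tensor_vec_def mult.commute)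
    also have "nrm2 \<dots> = nrm2 A + nrm2 B"
    proof -
      have "inner_l2 (u s) A = inner_l2 Y1 (contr1 (u s) (d s))"
        unfolding A_def using inner_contr[OF u_l2[OF s] Y1l dl[OF s]] inner_contr1[OF u_l2[OF s] Y1l dl[OF s]] by simp
      then have "inner_l2 (u s) A = 0" using du[OF s] by simp
      then have z: "inner_l2 A (u s) = 0" using inner_conj[of A "u s"] by simp
      have "inner_l2 (tensor_vec A (u t)) (tensor_vec (u s) B) = inner_l2 A (u s) * inner_l2 (u t) B"
        by (rule inner_tensor[OF Al u_l2[OF t] u_l2[OF s] Bl])
      then show ?thesis
        using nrm2_add[OF l2_tensor[OF Al u_l2[OF t]] l2_tensor[OF u_l2[OF s] Bl]] z
        by (simp add: nrm2_tensor[OF Al u_l2[OF t]] nrm2_tensor[OF u_l2[OF s] Bl] u_n s t)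
    qed
    also have "\<dots> \<le> C * nrm2 Y1 + C * nrm2 Y2"
    proof -
      have "nrm2 A \<le> C * nrm2 Y1" using Ps Y1F unfolding Pb_def A_def by blast
      moreover have "nrm2 B \<le> C * nrm2 Y2" using Pt Y2F unfolding Pb_def B_def by blast
      ultimately show ?thesis by linarith
    qed
    also have "\<dots> = C * (nrm2 Y1 + nrm2 Y2)" by (simp add: algebra_simps)
    also have "\<dots> \<le> C * nrm2 X"
    proof (rule mult_left_mono[OF _ C])
      show "nrm2 Y1 + nrm2 Y2 \<le> nrm2 X"
        using bessel[OF v_l2[OF s] v_l2[OF t] v_n[OF s] v_n[OF t] Xl]
        unfolding Y1_def Y2_def X1_def X2_def .
    qed
    finally show "nrm2 (contr x (d (s+t))) \<le> C * nrm2 x" unfolding nX .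
  qed
  have K4: "Pb r (nrm2 (d r))" if r: "r > 0" for r
    unfolding Pb_def
  proof
    fix x assume "x \<in> F r"
    then have "x \<in> l2" using cs_l2[OF Ft[OF r]] by blast
    then show "nrm2 (contr x (d r)) \<le> nrm2 (d r) * nrm2 x"
      using contr_bound(2)[OF _ dl[OF r]] by (simp add: mult.commute)
  qed
  have K5: "Pb r (nrm2 (d (r / 2^n)))" if r: "r > 0" for r n
    using r
  proof (induction n arbitrary: r)
    case 0 then show ?case using K4 by simp
  next
    case (Suc n)
    have h: "r / 2 > 0" using Suc.prems by simp
    have e: "r / 2 / 2^n = r / 2^(Suc n)" by simp
    have P: "Pb (r/2) (nrm2 (d (r / 2^(Suc n))))" using Suc.IH[OF h] e by simp
    have "Pb (r/2 + r/2) (nrm2 (d (r / 2^(Suc n))))"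
      by (rule K3[OF h h _ P P]) (simp add: nrm2_nonneg)
    then show ?case by simp
  qed
  have zero: "contr x (d t) = (\<lambda>_. 0)" if x: "x \<in> F t" for x
  proof -
    have xl: "x \<in> l2" using cs_l2[OF Ft[OF t0] x] .
    have "nrm2 (contr x (d t)) \<le> 0"
    proof (rule bound_zero[where K="nrm2 (d t) * nrm2 x"])
      show "0 \<le> nrm2 (d t) * nrm2 x" by (simp add: nrm2_nonneg)
      fix n :: nat
      have "nrm2 (contr x (d t)) \<le> nrm2 (d (t / 2^n)) * nrm2 x"
        using K5[OF t0, of n] x unfolding Pb_def by blast
      also have "nrm2 (d (t / 2^n)) = nrm2 (d t) / 2^n" using K2[OF t0, of n] by simp
      finally show "nrm2 (contr x (d t)) \<le> nrm2 (d t) * nrm2 x / 2^n" by simp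
    qed
    then have "nrm2 (contr x (d t)) = 0" using nrm2_nonneg[of "contr x (d t)"] by linarith
    then show ?thesis using nrm2_zero contr_bound(1)[OF xl dl[OF t0]] by blast
  qed
  show ?thesis
  proof
    fix p :: "'i \<times> 'j"
    obtain i j where p: "p = (i,j)" by fastforce
    have rF: "(\<lambda>j. d t (i,j)) \<in> F t" by (rule row_in[OF Et[OF t0] Ft[OF t0] din[OF t0]])
    have rl: "(\<lambda>j. d t (i,j)) \<in> l2" using cs_l2[OF Ft[OF t0] rF] .
    have "contr (\<lambda>j. d t (i,j)) (d t) i = 0" using zero[OF rF] by simp
    then have "nrm2 (\<lambda>j. d t (i,j)) = 0" unfolding contr_def using inner_self[OF rl] by simp
    then have z: "(\<lambda>j. d t (i,j)) = (\<lambda>_. 0)" using nrm2_zero[OF rl] by blast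
    show "d t p = 0" using fun_cong[OF z, of j] p by simp
  qed
qed

end

lemma contr_diff:
  assumes "x \<in> l2" "g \<in> l2" "h \<in> l2"
  shows "contr x (\<lambda>p. g p - h p) = (\<lambda>i. contr x g i - contr x h i)"
  using contr_add[OF assms(1,2) l2_scale[OF assms(3), of "-1"]] contr_scale[of x "-1" h] by simp

lemma contr1_diff:
  assumes "y \<in> l2" "g \<in> l2" "h \<in> l2"
  shows "contr1 y (\<lambda>p. g p - h p) = (\<lambda>i. contr1 y g i - contr1 y h i)"
  using contr1_add[OF assms(1,2) l2_scale[OF assms(3), of "-1"]] contr1_scale[of y "-1" h] by simp

context twosys begin

lemma forward:
  assumes c: "c \<in> roots (tensor_spaces E F) (tensor_W WE WF) (tensor_section u v)"
  shows "\<exists>a \<in> roots E WE u. \<exists>b \<in> roots F WF v.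
              \<forall>t>0. c t = (\<lambda>p. tensor_vec (a t) (v t) p + tensor_vec (u t) (b t) p)"
proof -
  have cm: "meas_section c" and cin: "\<And>t. t > 0 \<Longrightarrow> c t \<in> htensor (E t) (F t)"
    and cadd: "\<And>s t. s > 0 \<Longrightarrow> t > 0 \<Longrightarrow> tensor_W WE WF s t (c (s+t)) =
        (\<lambda>p. tensor_vec (c s) (tensor_vec (u t) (v t)) p + tensor_vec (tensor_vec (u s) (v s)) (c t) p)"
    and corth: "\<And>t. t > 0 \<Longrightarrow> inner_l2 (c t) (tensor_vec (u t) (v t)) = 0"
    using c unfolding roots_def additive_unit_def tensor_spaces_def tensor_section_def by blast+
  have Tcs: "closed_subspace (htensor (E t) (F t))" if t: "t > 0" for t
    by (rule htensor_cs) (use cs_l2[OF Et] cs_l2[OF Ft] t in blast)+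
  have cl: "t > 0 \<Longrightarrow> c t \<in> l2" for t using cs_l2[OF Tcs cin] by blast
  define a where "a = (\<lambda>t. contr (v t) (c t))"
  define b where "b = (\<lambda>t. contr1 (u t) (c t))"
  have ain: "t > 0 \<Longrightarrow> a t \<in> E t" for t unfolding a_def using contr_in[OF Et Ft v_l2 cin] by blast
  have bin: "t > 0 \<Longrightarrow> b t \<in> F t" for t unfolding b_def using contr1_in[OF Et Ft u_l2 cin] by blast
  have al: "t > 0 \<Longrightarrow> a t \<in> l2" for t using cs_l2[OF Et ain] by blast
  have bl: "t > 0 \<Longrightarrow> b t \<in> l2" for t using cs_l2[OF Ft bin] by blast
  have Hc: "hsetup.H (WE s t) (WF s t) (c (s+t)) =
      (\<lambda>((i1,i2),(k1,k2)). c s (i1,k1) * u t i2 * v t k2 + u s i1 * v s k1 * c t (i2,k2))"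
    if s: "s > 0" and t: "t > 0" for s t
    by (rule shuffle_form) (use cadd[OF s t] tW[OF s t] in simp)
  have aadd: "WE s t (a (s+t)) = (\<lambda>p. tensor_vec (a s) (u t) p + tensor_vec (u s) (a t) p)"
    if s: "s > 0" and t: "t > 0" for s t
  proof -
    interpret h: hsetup "E (s+t)" "F (s+t)" "htensor (E s) (E t)" "htensor (F s) (F t)" "WE s t" "WF s t"
      by (rule hs[OF s t])
    have st: "s + t > 0" using s t by simp
    have e1: "contr (v t) (tensor_vec (v s) (v t)) = v s" unfolding contr_tensor vv[OF t] by simp
    have e2: "contr1 (v s) (tensor_vec (v s) (v t)) = v t" unfolding contr1_tensor vv[OF s] by simp
    have "WE s t (a (s+t)) = contr (WF s t (v (s+t))) (h.H (c (s+t)))"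
      unfolding a_def by (rule h.comm[OF v_in[OF st] cin[OF st]])
    also have "\<dots> = (\<lambda>(i1,i2). u t i2 * contr (contr (v t) (tensor_vec (v s) (v t))) (c s) i1
                   + u s i1 * contr (contr1 (v s) (tensor_vec (v s) (v t))) (c t) i2)"
      unfolding v_mult[OF s t] Hc[OF s t]
      by (rule rowG[OF cl[OF s] cl[OF t] u_l2[OF s] u_l2[OF t] v_l2[OF s] v_l2[OF t] l2_tensor[OF v_l2[OF s] v_l2[OF t]]])
    also have "\<dots> = (\<lambda>p. tensor_vec (a s) (u t) p + tensor_vec (u s) (a t) p)"
      unfolding e1 e2 a_def by (rule ext, clarify) (simp add: tensor_vec_def mult.commute)
    finally show ?thesis .
  qed
  have badd: "WF s t (b (s+t)) = (\<lambda>p. tensor_vec (b s) (v t) p + tensor_vec (v s) (b t) p)"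
    if s: "s > 0" and t: "t > 0" for s t
  proof -
    interpret h: hsetup "E (s+t)" "F (s+t)" "htensor (E s) (E t)" "htensor (F s) (F t)" "WE s t" "WF s t"
      by (rule hs[OF s t])
    have st: "s + t > 0" using s t by simp
    have e1: "contr (u t) (tensor_vec (u s) (u t)) = u s" unfolding contr_tensor uu[OF t] by simp
    have e2: "contr1 (u s) (tensor_vec (u s) (u t)) = u t" unfolding contr1_tensor uu[OF s] by simp
    have "WF s t (b (s+t)) = contr1 (WE s t (u (s+t))) (h.H (c (s+t)))"
      unfolding b_def by (rule h.comm1[OF u_in[OF st] cin[OF st]])
    also have "\<dots> = (\<lambda>(k1,k2). v t k2 * contr1 (contr (u t) (tensor_vec (u s) (u t))) (c s) k1
                   + v s k1 * contr1 (contr1 (u s) (tensor_vec (u s) (u t))) (c t) k2)"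
      unfolding u_mult[OF s t] Hc[OF s t]
      by (rule colG[OF cl[OF s] cl[OF t] u_l2[OF s] u_l2[OF t] v_l2[OF s] v_l2[OF t] l2_tensor[OF u_l2[OF s] u_l2[OF t]]])
    also have "\<dots> = (\<lambda>p. tensor_vec (b s) (v t) p + tensor_vec (v s) (b t) p)"
      unfolding e1 e2 b_def by (rule ext, clarify) (simp add: tensor_vec_def mult.commute)
    finally show ?thesis .
  qed
  have ua: "inner_l2 (u t) (a t) = 0" if t: "t > 0" for t
  proof -
    have "inner_l2 (u t) (a t) = inner_l2 (tensor_vec (u t) (v t)) (c t)"
      unfolding a_def by (rule inner_contr[OF u_l2[OF t] v_l2[OF t] cl[OF t]])
    also have "\<dots> = 0" using inner_conj[of "tensor_vec (u t) (v t)" "c t"] corth[OF t] by simp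
    finally show ?thesis .
  qed
  have aorth: "inner_l2 (a t) (u t) = 0" if t: "t > 0" for t
    using ua[OF t] inner_conj[of "a t" "u t"] by simp
  have vb: "inner_l2 (v t) (b t) = 0" if t: "t > 0" for t
  proof -
    have "inner_l2 (v t) (b t) = inner_l2 (tensor_vec (u t) (v t)) (c t)"
      unfolding b_def by (rule inner_contr1[OF u_l2[OF t] v_l2[OF t] cl[OF t]])
    also have "\<dots> = 0" using inner_conj[of "tensor_vec (u t) (v t)" "c t"] corth[OF t] by simp
    finally show ?thesis .
  qed
  have borth: "inner_l2 (b t) (v t) = 0" if t: "t > 0" for t
    using vb[OF t] inner_conj[of "b t" "v t"] by simp
  have ameas: "meas_section a"
    unfolding meas_section_def
  proof
    fix x :: "'i \<Rightarrow> complex" assume x: "x \<in> l2"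
    define G where "G = (\<lambda>(t::real) p. cnj (x (fst p) * v t (snd p)) * c t p)"
    have eq: "inner_l2 x (a t) = infsum (G t) UNIV" if t: "t > 0" for t
    proof -
      have "inner_l2 x (a t) = inner_l2 (tensor_vec x (v t)) (c t)"
        unfolding a_def by (rule inner_contr[OF x v_l2[OF t] cl[OF t]])
      then show ?thesis by (simp add: inner_l2_def G_def tensor_vec_def case_prod_unfold)
    qed
    have "(\<lambda>t. infsum (G t) UNIV) \<in> borel_measurable (restrict_space borel {0<..})"
    proof (rule meas_infsum)
      fix p :: "'i \<times> 'j"
      show "(\<lambda>t. G t p) \<in> borel_measurable (restrict_space borel {0<..})"
        unfolding G_def
        by (intro borel_measurable_times meas_cnj borel_measurable_const
            meas_coord[OF cm] meas_coord[OF v_meas])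
    next
      fix t :: real assume "t \<in> space (restrict_space borel {0<..})"
      then have t: "t > 0" by (simp add: space_restrict_space)
      have "(\<lambda>p. cnj (tensor_vec x (v t) p) * c t p) summable_on UNIV"
        by (rule summable_inner[OF l2_tensor[OF x v_l2[OF t]] cl[OF t]])
      then show "G t summable_on UNIV" by (simp add: G_def tensor_vec_def case_prod_unfold)
    qed
    then show "(\<lambda>t. inner_l2 x (a t)) \<in> borel_measurable (restrict_space borel {0<..})"
      by (subst measurable_cong[where g="\<lambda>t. infsum (G t) UNIV"]) (auto simp: space_restrict_space eq)
  qed
  have bmeas: "meas_section b"
    unfolding meas_section_def
  proof
    fix y :: "'j \<Rightarrow> complex" assume y: "y \<in> l2"
    define G where "G = (\<lambda>(t::real) p. cnj (u t (fst p) * y (snd p)) * c t p)"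
    have eq: "inner_l2 y (b t) = infsum (G t) UNIV" if t: "t > 0" for t
    proof -
      have "inner_l2 y (b t) = inner_l2 (tensor_vec (u t) y) (c t)"
        unfolding b_def by (rule inner_contr1[OF u_l2[OF t] y cl[OF t]])
      then show ?thesis by (simp add: inner_l2_def G_def tensor_vec_def case_prod_unfold)
    qed
    have "(\<lambda>t. infsum (G t) UNIV) \<in> borel_measurable (restrict_space borel {0<..})"
    proof (rule meas_infsum)
      fix p :: "'i \<times> 'j"
      show "(\<lambda>t. G t p) \<in> borel_measurable (restrict_space borel {0<..})"
        unfolding G_def
        by (intro borel_measurable_times meas_cnj borel_measurable_const
            meas_coord[OF cm] meas_coord[OF u_meas])
    next
      fix t :: real assume "t \<in> space (restrict_space borel {0<..})"
      then have t: "t > 0" by (simp add: space_restrict_space)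
      have "(\<lambda>p. cnj (tensor_vec (u t) y p) * c t p) summable_on UNIV"
        by (rule summable_inner[OF l2_tensor[OF u_l2[OF t] y] cl[OF t]])
      then show "G t summable_on UNIV" by (simp add: G_def tensor_vec_def case_prod_unfold)
    qed
    then show "(\<lambda>t. inner_l2 y (b t)) \<in> borel_measurable (restrict_space borel {0<..})"
      by (subst measurable_cong[where g="\<lambda>t. infsum (G t) UNIV"]) (auto simp: space_restrict_space eq)
  qed
  have aroot: "a \<in> roots E WE u"
    unfolding roots_def additive_unit_def using ameas ain aadd aorth by blast
  have broot: "b \<in> roots F WF v"
    unfolding roots_def additive_unit_def using bmeas bin badd borth by blast
  define d where "d = (\<lambda>t p. c t p - (tensor_vec (a t) (v t) p + tensor_vec (u t) (b t) p))"
  have Al: "t > 0 \<Longrightarrow> tensor_vec (a t) (v t) \<in> l2" for t using l2_tensor al v_l2 by blast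
  have Bl: "t > 0 \<Longrightarrow> tensor_vec (u t) (b t) \<in> l2" for t using l2_tensor u_l2 bl by blast
  have ABl: "t > 0 \<Longrightarrow> (\<lambda>p. tensor_vec (a t) (v t) p + tensor_vec (u t) (b t) p) \<in> l2" for t
    using l2_add Al Bl by blast
  have ABin: "(\<lambda>p. tensor_vec (a t) (v t) p + tensor_vec (u t) (b t) p) \<in> htensor (E t) (F t)"
    if t: "t > 0" for t
    by (rule cs_add[OF Tcs[OF t] tensor_in_htensor[OF ain[OF t] v_in[OF t]] tensor_in_htensor[OF u_in[OF t] bin[OF t]]])
  have din: "d t \<in> htensor (E t) (F t)" if t: "t > 0" for t
    unfolding d_def by (rule cs_diff[OF Tcs[OF t] cin[OF t] ABin[OF t]])
  have dv: "contr (v t) (d t) = (\<lambda>_. 0)" if t: "t > 0" for t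
  proof -
    have "contr (v t) (d t) = (\<lambda>i. contr (v t) (c t) i - (contr (v t) (tensor_vec (a t) (v t)) i + contr (v t) (tensor_vec (u t) (b t)) i))"
      unfolding d_def contr_diff[OF v_l2[OF t] cl[OF t] ABl[OF t]] contr_add[OF v_l2[OF t] Al[OF t] Bl[OF t]] ..
    also have "\<dots> = (\<lambda>_. 0)"
      unfolding contr_tensor vv[OF t] vb[OF t] a_def by simp
    finally show ?thesis .
  qed
  have du: "contr1 (u t) (d t) = (\<lambda>_. 0)" if t: "t > 0" for t
  proof -
    have "contr1 (u t) (d t) = (\<lambda>i. contr1 (u t) (c t) i - (contr1 (u t) (tensor_vec (a t) (v t)) i + contr1 (u t) (tensor_vec (u t) (b t)) i))"
      unfolding d_def contr1_diff[OF u_l2[OF t] cl[OF t] ABl[OF t]] contr1_add[OF u_l2[OF t] Al[OF t] Bl[OF t]] ..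
    also have "\<dots> = (\<lambda>_. 0)"
      unfolding contr1_tensor uu[OF t] ua[OF t] b_def by simp
    finally show ?thesis .
  qed
  have dw: "inner_l2 (d t) (tensor_vec (u t) (v t)) = 0" if t: "t > 0" for t
  proof -
    have wl: "tensor_vec (u t) (v t) \<in> l2" using l2_tensor u_l2 v_l2 t by blast
    have "inner_l2 (d t) (tensor_vec (u t) (v t)) = inner_l2 (c t) (tensor_vec (u t) (v t))
        - (inner_l2 (tensor_vec (a t) (v t)) (tensor_vec (u t) (v t)) + inner_l2 (tensor_vec (u t) (b t)) (tensor_vec (u t) (v t)))"
      unfolding d_def inner_diff_left[OF cl[OF t] ABl[OF t] wl] inner_add_left[OF Al[OF t] Bl[OF t] wl] ..
    also have "\<dots> = 0"
      using corth[OF t] inner_tensor[OF al[OF t] v_l2[OF t] u_l2[OF t] v_l2[OF t]]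
        inner_tensor[OF u_l2[OF t] bl[OF t] u_l2[OF t] v_l2[OF t]] aorth[OF t] borth[OF t] by simp
    finally show ?thesis .
  qed
  have dadd: "tensor_W WE WF s t (d (s+t)) =
        (\<lambda>p. tensor_vec (d s) (tensor_vec (u t) (v t)) p + tensor_vec (tensor_vec (u s) (v s)) (d t) p)"
    if s: "s > 0" and t: "t > 0" for s t
  proof -
    interpret h: hsetup "E (s+t)" "F (s+t)" "htensor (E s) (E t)" "htensor (F s) (F t)" "WE s t" "WF s t"
      by (rule hs[OF s t])
    have st: "s + t > 0" using s t by simp
    let ?A = "tensor_vec (a (s+t)) (v (s+t))" and ?B = "tensor_vec (u (s+t)) (b (s+t))"
    have A: "?A \<in> h.T0" by (rule tensor_in_htensor[OF ain[OF st] v_in[OF st]])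
    have B: "?B \<in> h.T0" by (rule tensor_in_htensor[OF u_in[OF st] bin[OF st]])
    have AB: "(\<lambda>p. ?A p + ?B p) \<in> h.T0" using ABin[OF st] .
    have Hd: "h.H (d (s+t)) = (\<lambda>q. h.H (c (s+t)) q - (h.H ?A q + h.H ?B q))"
    proof -
      have deq: "d (s+t) = (\<lambda>p. c (s+t) p + (-1) * (?A p + ?B p))" unfolding d_def by (rule ext) (simp add: algebra_simps)
      have "h.H (d (s+t)) = (\<lambda>q. h.H (c (s+t)) q + h.H (\<lambda>p. (-1) * (?A p + ?B p)) q)"
        unfolding deq by (rule h.H_add[OF cin[OF st] cs_scale[OF h.T0 AB]])
      also have "\<dots> = (\<lambda>q. h.H (c (s+t)) q - (h.H ?A q + h.H ?B q))"
        unfolding h.H_scale[OF AB] h.H_add[OF A B] by (rule ext) (simp add: algebra_simps)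
      finally show ?thesis .
    qed
    have "tensor_W WE WF s t (d (s+t)) = shuffle (h.H (d (s+t)))" by (rule tW[OF s t])
    also have "\<dots> = (\<lambda>p. shuffle (h.H (c (s+t))) p - (shuffle (h.H ?A) p + shuffle (h.H ?B) p))"
      unfolding Hd by (auto simp: shuffle_def fun_eq_iff)
    also have "shuffle (h.H (c (s+t))) = tensor_W WE WF s t (c (s+t))" using tW[OF s t] by simp
    also have "h.H ?A = tensor_vec (WE s t (a (s+t))) (WF s t (v (s+t)))"
      by (rule h.H_tensor[OF ain[OF st] v_in[OF st]])
    also have "h.H ?B = tensor_vec (WE s t (u (s+t))) (WF s t (b (s+t)))"
      by (rule h.H_tensor[OF u_in[OF st] bin[OF st]])
    also have "(\<lambda>p. tensor_W WE WF s t (c (s + t)) p - (shuffle (tensor_vec (WE s t (a (s + t))) (WF s t (v (s + t)))) p +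
                 shuffle (tensor_vec (WE s t (u (s + t))) (WF s t (b (s + t)))) p))
       = (\<lambda>p. tensor_vec (d s) (tensor_vec (u t) (v t)) p + tensor_vec (tensor_vec (u s) (v s)) (d t) p)"
      unfolding cadd[OF s t] aadd[OF s t] badd[OF s t] u_mult[OF s t] v_mult[OF s t] d_def
      by (auto simp: fun_eq_iff shuffle_def tensor_vec_def algebra_simps)
    finally show ?thesis .
  qed
  have dz: "d t = (\<lambda>_. 0)" if t: "t > 0" for t
    by (rule dzero[OF din dv du dw dadd t])
  have "c t = (\<lambda>p. tensor_vec (a t) (v t) p + tensor_vec (u t) (b t) p)" if t: "t > 0" for t
  proof
    fix p
    show "c t p = tensor_vec (a t) (v t) p + tensor_vec (u t) (b t) p"
      using fun_cong[OF dz[OF t], of p] by (simp add: d_def)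
  qed
  then show ?thesis using aroot broot by blast
qed

end

theorem mainTheorem11:
  fixes E :: "real \<Rightarrow> ('i::countable \<Rightarrow> complex) set"
    and WE :: "real \<Rightarrow> real \<Rightarrow> ('i \<Rightarrow> complex) \<Rightarrow> ('i \<times> 'i \<Rightarrow> complex)"
    and F :: "real \<Rightarrow> ('j::countable \<Rightarrow> complex) set"
    and WF :: "real \<Rightarrow> real \<Rightarrow> ('j \<Rightarrow> complex) \<Rightarrow> ('j \<times> 'j \<Rightarrow> complex)"
    and u :: "real \<Rightarrow> ('i \<Rightarrow> complex)"
    and v :: "real \<Rightarrow> ('j \<Rightarrow> complex)"
  assumes "product_system E WE" and "product_system F WF"
    and "normalized_unit E WE u" and "normalized_unit F WF v"
  shows "\<forall>c. c \<in> roots (tensor_spaces E F) (tensor_W WE WF) (tensor_section u v) \<longleftrightarrow>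
           (\<exists>a \<in> roots E WE u. \<exists>b \<in> roots F WF v.
              \<forall>t>0. c t = (\<lambda>p. tensor_vec (a t) (v t) p + tensor_vec (u t) (b t) p))"
proof -
  interpret twosys E WE F WF u v
    by (rule twosys.intro) (rule assms)+
  show ?thesis using forward backward by blast
qed

end
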